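(* Let $\gamma$ be a smooth nondegenerate curve in the equi-affine plane, parametrised by equi-affine arc-length $s$, with equi-affine curvature $\kappa$. Then $\gamma$ is a critical point of $\int\kappa\,\mathrm{d}s$ under area constraint, without being an unconstrained critical point of $\int\kappa\,\mathrm{d}s$, if and only if there exist a point $O$ (origin) and a constant $c\neq 0$ such that the equi-affine support function of $\gamma$ with respect to $O$ satisfies $\rho_O=c\,\kappa$.
   Context: The equi-affine plane is $\mathbb{R}^2$ with area form $|u,v|=\det(u,v)$. The curve satisfies $|\gamma',\gamma''|=1$; primes denote $s$-derivatives; $T=\gamma'$, $N=\gamma''$, and $\kappa$ is defined by $\gamma'''=-\kappa\gamma'$. For a point $O$, write the position vector $P=\gamma-O=-\rho_O\,N+\phi\,T$; the function $\rho_O=|P,T|$ is the equi-affine support function with respect to $O$. Variations are smooth and compactly supported; a variation with variation vector field $f\,N+g\,T$ changes the (enclosed, signed) area to first order by $\delta\,\mathrm{Area}=-\int f\,\mathrm{d}s$. The curve is a critical point of $\int\kappa\,\mathrm{d}s$ under area constraint if there is a constant $\lambda$ with $\delta\int\kappa\,\mathrm{d}s=\lambda\,\delta\,\mathrm{Area}$ for all such variations; it is an unconstrained critical point if $\delta\int\kappa\,\mathrm{d}s=0$ for all such variations. *)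

theory Defs
  imports "HOL-Analysis.Analysis"
begin

text \<open>Plane curves are given by their two component functions x, y :: real => real
  (only their values on an open parameter interval I matter).\<close>

definition det2 :: "real \<Rightarrow> real \<Rightarrow> real \<Rightarrow> real \<Rightarrow> real" where
  "det2 u1 u2 v1 v2 = u1 * v2 - u2 * v1"

definition C_inf_on :: "real set \<Rightarrow> (real \<Rightarrow> real) \<Rightarrow> bool" where
  "C_inf_on I f \<longleftrightarrow> (\<forall>n. \<forall>t\<in>I. ((deriv ^^ n) f) differentiable (at t))"

definition ea_kappa :: "(real \<Rightarrow> real) \<Rightarrow> (real \<Rightarrow> real) \<Rightarrow> real \<Rightarrow> real" where
  "ea_kappa x y s = (THE k. (deriv ^^ 3) x s = - k * deriv x s \<and> (deriv ^^ 3) y s = - k * deriv y s)"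

definition support_fn :: "(real \<Rightarrow> real) \<Rightarrow> (real \<Rightarrow> real) \<Rightarrow> real \<Rightarrow> real \<Rightarrow> real \<Rightarrow> real" where
  "support_fn x y o1 o2 s = det2 (x s - o1) (y s - o2) (deriv x s) (deriv y s)"

definition ea_speed :: "(real \<Rightarrow> real) \<Rightarrow> (real \<Rightarrow> real) \<Rightarrow> real \<Rightarrow> real" where
  "ea_speed x y t = (det2 (deriv x t) (deriv y t) (deriv (deriv x) t) (deriv (deriv y) t)) powr (1/3)"

definition ea_D :: "(real \<Rightarrow> real) \<Rightarrow> (real \<Rightarrow> real) \<Rightarrow> (real \<Rightarrow> real) \<Rightarrow> real \<Rightarrow> real" where
  "ea_D x y f = (\<lambda>t. deriv f t / ea_speed x y t)"

definition ea_curv_gen :: "(real \<Rightarrow> real) \<Rightarrow> (real \<Rightarrow> real) \<Rightarrow> real \<Rightarrow> real" where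
  "ea_curv_gen x y t =
     det2 (ea_D x y (ea_D x y x) t) (ea_D x y (ea_D x y y) t)
          (ea_D x y (ea_D x y (ea_D x y x)) t) (ea_D x y (ea_D x y (ea_D x y y)) t)"

definition total_curv :: "(real \<Rightarrow> real) \<Rightarrow> (real \<Rightarrow> real) \<Rightarrow> real \<Rightarrow> real \<Rightarrow> real" where
  "total_curv x y a b = integral {a..b} (\<lambda>t. ea_curv_gen x y t * ea_speed x y t)"

definition admissible_var ::
  "real set \<Rightarrow> (real \<Rightarrow> real) \<Rightarrow> (real \<Rightarrow> real) \<Rightarrow> real \<Rightarrow> real \<Rightarrow> bool" where
  "admissible_var I v1 v2 a b \<longleftrightarrow> C_inf_on I v1 \<and> C_inf_on I v2 \<and> a \<in> I \<and> b \<in> I \<and> a < b \<and>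
     (\<forall>t\<in>I. t \<notin> {a..b} \<longrightarrow> v1 t = 0 \<and> v2 t = 0)"

definition curv_variation ::
  "(real \<Rightarrow> real) \<Rightarrow> (real \<Rightarrow> real) \<Rightarrow> (real \<Rightarrow> real) \<Rightarrow> (real \<Rightarrow> real) \<Rightarrow> real \<Rightarrow> real \<Rightarrow> real \<Rightarrow> real" where
  "curv_variation x y v1 v2 a b = (\<lambda>eps. total_curv (\<lambda>t. x t + eps * v1 t) (\<lambda>t. y t + eps * v2 t) a b)"

text \<open>First variation of area: delta Area = - integral f ds, where V = f N + g T,
  i.e. f = |T, V| (arc-length parametrised curve, so ds = dt).\<close>
definition area_variation ::
  "(real \<Rightarrow> real) \<Rightarrow> (real \<Rightarrow> real) \<Rightarrow> (real \<Rightarrow> real) \<Rightarrow> (real \<Rightarrow> real) \<Rightarrow> real \<Rightarrow> real \<Rightarrow> real" where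
  "area_variation x y v1 v2 a b = - integral {a..b} (\<lambda>t. det2 (deriv x t) (deriv y t) (v1 t) (v2 t))"

definition area_constrained_critical :: "real set \<Rightarrow> (real \<Rightarrow> real) \<Rightarrow> (real \<Rightarrow> real) \<Rightarrow> bool" where
  "area_constrained_critical I x y \<longleftrightarrow> (\<exists>lam. \<forall>v1 v2 a b. admissible_var I v1 v2 a b \<longrightarrow>
     (curv_variation x y v1 v2 a b has_real_derivative (lam * area_variation x y v1 v2 a b)) (at 0))"

definition unconstrained_critical :: "real set \<Rightarrow> (real \<Rightarrow> real) \<Rightarrow> (real \<Rightarrow> real) \<Rightarrow> bool" where
  "unconstrained_critical I x y \<longleftrightarrow> (\<forall>v1 v2 a b. admissible_var I v1 v2 a b \<longrightarrow>
     (curv_variation x y v1 v2 a b has_real_derivative 0) (at 0))"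

end

theory Submission
  imports Defs "HOL-Analysis.Analysis"
begin

abbreviation Dn :: "nat \<Rightarrow> (real \<Rightarrow> real) \<Rightarrow> real \<Rightarrow> real" where
  "Dn n f \<equiv> (deriv ^^ n) f"

lemma Dn_Suc: "Dn (Suc n) f = deriv (Dn n f)" by simp
lemma Dn_Suc': "Dn (Suc n) f = Dn n (deriv f)" by (simp add: funpow_Suc_right del: funpow.simps)

definition bk :: "nat \<Rightarrow> real \<Rightarrow> real" where
  "bk k t = (if t \<le> 0 then 0 else (1/t)^k * exp (-1/t))"

lemma bk_lim: "(bk k \<longlongrightarrow> 0) (at 0)"
proof -
  have L: "(bk k \<longlongrightarrow> 0) (at_left 0)"
  proof (rule tendsto_eventually)
    have "\<forall>\<^sub>F t in at_left 0. t < (0::real)" by (simp add: eventually_at_filter)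
    then show "\<forall>\<^sub>F t in at_left 0. bk k t = 0"
      by eventually_elim (auto simp: bk_def)
  qed
  have R: "(bk k \<longlongrightarrow> 0) (at_right 0)"
  proof -
    have "((\<lambda>u. u ^ k / exp u) \<longlongrightarrow> (0::real)) at_top" by (rule tendsto_power_div_exp_0)
    then have "((\<lambda>t. (inverse t) ^ k / exp (inverse t)) \<longlongrightarrow> (0::real)) (at_right 0)"
      using filterlim_compose filterlim_inverse_at_top_right by blast
    moreover have "\<forall>\<^sub>F t in at_right 0. (inverse t) ^ k / exp (inverse t) = bk k t"
    proof -
      have "\<forall>\<^sub>F t in at_right 0. t > (0::real)" by (simp add: eventually_at_filter)
      then show ?thesis by eventually_elim (auto simp: bk_def exp_minus field_simps)
    qed
    ultimately show ?thesis by (simp add: tendsto_cong)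
  qed
  show ?thesis using L R filterlim_at_split by blast
qed

lemma bk_deriv: "(bk k has_real_derivative (- real k * bk (Suc k) t + bk (Suc (Suc k)) t)) (at t)"
proof (cases "t < 0")
  case True
  have "((\<lambda>_. 0) has_real_derivative 0) (at t)" by simp
  then have "(bk k has_real_derivative 0) (at t)"
    by (rule has_field_derivative_transform_within_open[of "\<lambda>_. 0" _ t "{..<0}"])
       (use True in \<open>auto simp: bk_def\<close>)
  moreover have "bk (Suc k) t = 0" "bk (Suc (Suc k)) t = 0" using True by (auto simp: bk_def)
  ultimately show ?thesis by simp
next
  case False
  show ?thesis
  proof (cases "t = 0")
    case True
    have "((\<lambda>y. (bk k y - bk k 0) / (y - 0)) \<longlongrightarrow> 0) (at 0)"
    proof (rule tendsto_cong[THEN iffD1, OF _ bk_lim[of "Suc k"]])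
      show "\<forall>\<^sub>F y in at 0. bk (Suc k) y = (bk k y - bk k 0) / (y - 0)"
        by (auto simp: bk_def eventually_at_filter field_simps)
    qed
    then show ?thesis using True by (simp add: has_field_derivative_iff bk_def)
  next
    case f2: False
    with False have tp: "t > 0" by simp
    have "((\<lambda>t. (1/t)^k * exp (-1/t)) has_real_derivative
        (- real k * ((1/t)^(Suc k) * exp (-1/t)) + (1/t)^(Suc (Suc k)) * exp (-1/t))) (at t)"
      using tp
      apply (auto intro!: derivative_eq_intros)
      apply (cases k)
       apply (auto simp: field_simps power_Suc)
      done
    then have "(bk k has_real_derivative
        (- real k * ((1/t)^(Suc k) * exp (-1/t)) + (1/t)^(Suc (Suc k)) * exp (-1/t))) (at t)"
      by (rule has_field_derivative_transform_within_open[of _ _ t "{0<..}"])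
         (use tp in \<open>auto simp: bk_def\<close>)
    moreover have "bk (Suc k) t = (1/t)^(Suc k) * exp (-1/t)"
      "bk (Suc (Suc k)) t = (1/t)^(Suc (Suc k)) * exp (-1/t)" using tp by (auto simp: bk_def)
    ultimately show ?thesis by simp
  qed
qed

inductive good :: "(real \<Rightarrow> real) \<Rightarrow> bool" where
  g1: "good (\<lambda>t. c * bk k t)"
| g2: "good f \<Longrightarrow> good g \<Longrightarrow> good (\<lambda>t. f t + g t)"

lemma good_deriv: "good f \<Longrightarrow> \<exists>f'. good f' \<and> (\<forall>t. (f has_real_derivative f' t) (at t))"
proof (induction rule: good.induct)
  case (g1 c k)
  let ?f' = "\<lambda>t. (c * - real k) * bk (Suc k) t + c * bk (Suc (Suc k)) t"
  have "good ?f'" by (intro good.intros)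
  moreover have "\<forall>t. ((\<lambda>t. c * bk k t) has_real_derivative ?f' t) (at t)"
    using DERIV_cmult[OF bk_deriv, of c k] by (auto simp: algebra_simps)
  ultimately show ?case by blast
next
  case (g2 f g)
  then obtain f' g' where "good f'" "good g'" "\<forall>t. (f has_real_derivative f' t) (at t)"
    "\<forall>t. (g has_real_derivative g' t) (at t)" by blast
  then show ?case by (intro exI[of _ "\<lambda>t. f' t + g' t"]) (auto intro: good.intros DERIV_add)
qed

lemma good_Dn: "good f \<Longrightarrow> good (Dn n f) \<and> (\<forall>t. Dn n f differentiable at t)"
proof (induction n)
  case 0
  then show ?case using good_deriv real_differentiable_def by fastforce
next
  case (Suc n)
  then obtain f' where f': "good f'" "\<forall>t. (Dn n f has_real_derivative f' t) (at t)"
    using good_deriv by blast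
  have "deriv (Dn n f) = f'" using f' DERIV_imp_deriv by blast
  then show ?case using f' good_deriv real_differentiable_def by (metis Dn_Suc)
qed

definition smooth :: "(real \<Rightarrow> real) \<Rightarrow> bool" where
  "smooth f \<longleftrightarrow> (\<forall>n t. Dn n f differentiable at t)"

definition psi :: "real \<Rightarrow> real" where "psi = bk 0"

lemma smooth_psi: "smooth psi"
proof -
  have "good (\<lambda>t. 1 * bk 0 t)" by (rule g1)
  then have "good psi" by (simp add: psi_def)
  then show ?thesis using good_Dn smooth_def by blast
qed

definition sm :: "nat \<Rightarrow> (real \<Rightarrow> real) \<Rightarrow> bool" where
  "sm n f \<longleftrightarrow> (\<forall>k\<le>n. \<forall>t. Dn k f differentiable at t)"

lemma smooth_sm: "smooth f \<longleftrightarrow> (\<forall>n. sm n f)"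
  unfolding smooth_def sm_def by blast

lemma sm_mono: "sm n f \<Longrightarrow> m \<le> n \<Longrightarrow> sm m f"
  unfolding sm_def by auto

lemma deriv_add_fun:
  fixes f g :: "real \<Rightarrow> real"
  assumes "\<And>t. f differentiable at t" "\<And>t. g differentiable at t"
  shows "deriv (\<lambda>t. f t + g t) = (\<lambda>t. deriv f t + deriv g t)"
proof
  fix t
  have "(f has_real_derivative deriv f t) (at t)" "(g has_real_derivative deriv g t) (at t)"
    using assms DERIV_deriv_iff_real_differentiable by blast+
  then have "((\<lambda>t. f t + g t) has_real_derivative deriv f t + deriv g t) (at t)"
    by (rule DERIV_add)
  then show "deriv (\<lambda>t. f t + g t) t = deriv f t + deriv g t" by (rule DERIV_imp_deriv)
qed

lemma deriv_mult_fun: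
  fixes f g :: "real \<Rightarrow> real"
  assumes "\<And>t. f differentiable at t" "\<And>t. g differentiable at t"
  shows "deriv (\<lambda>t. f t * g t) = (\<lambda>t. deriv f t * g t + f t * deriv g t)"
proof
  fix t
  have "(f has_real_derivative deriv f t) (at t)" "(g has_real_derivative deriv g t) (at t)"
    using assms DERIV_deriv_iff_real_differentiable by blast+
  then have "((\<lambda>t. f t * g t) has_real_derivative deriv f t * g t + f t * deriv g t) (at t)"
    by (auto intro!: derivative_eq_intros)
  then show "deriv (\<lambda>t. f t * g t) t = deriv f t * g t + f t * deriv g t" by (rule DERIV_imp_deriv)
qed

lemma Dn_add:
  assumes "sm n f" "sm n g" "m \<le> Suc n"
  shows "Dn m (\<lambda>t. f t + g t) = (\<lambda>t. Dn m f t + Dn m g t)"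
  using assms(3)
proof (induction m)
  case 0 then show ?case by simp
next
  case (Suc m)
  then have "m \<le> n" by simp
  then have d: "\<And>t. Dn m f differentiable at t" "\<And>t. Dn m g differentiable at t"
    using assms unfolding sm_def by auto
  have "Dn (Suc m) (\<lambda>t. f t + g t) = deriv (\<lambda>t. Dn m f t + Dn m g t)"
    using Suc by simp
  also have "\<dots> = (\<lambda>t. Dn (Suc m) f t + Dn (Suc m) g t)"
    using deriv_add_fun[OF d] by simp
  finally show ?case .
qed

lemma sm_add: "sm n f \<Longrightarrow> sm n g \<Longrightarrow> sm n (\<lambda>t. f t + g t)"
proof -
  assume a: "sm n f" "sm n g"
  show ?thesis unfolding sm_def
  proof (intro allI impI)
    fix k t assume "k \<le> n"
    then show "Dn k (\<lambda>t. f t + g t) differentiable at t"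
      using Dn_add[OF a, of k] a unfolding sm_def by auto
  qed
qed

lemma smooth_deriv: "smooth f \<Longrightarrow> smooth (deriv f)"
  unfolding smooth_def by (metis Dn_Suc')

lemma smooth_diff: "smooth f \<Longrightarrow> f differentiable at t"
  unfolding smooth_def by (metis funpow_0)

lemma sm_mult: "smooth f \<Longrightarrow> smooth g \<Longrightarrow> sm n (\<lambda>t. f t * g t)"
proof (induction n arbitrary: f g)
  case 0
  then show ?case unfolding sm_def using smooth_diff by auto
next
  case (Suc n)
  have A: "sm n (\<lambda>t. deriv f t * g t)" using Suc smooth_deriv by blast
  have B: "sm n (\<lambda>t. f t * deriv g t)" using Suc smooth_deriv by blast
  have eq: "deriv (\<lambda>t. f t * g t) = (\<lambda>t. deriv f t * g t + f t * deriv g t)"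
    using deriv_mult_fun smooth_diff Suc.prems by blast
  show ?case unfolding sm_def
  proof (intro allI impI)
    fix k t assume k: "k \<le> Suc n"
    show "Dn k (\<lambda>t. f t * g t) differentiable at t"
    proof (cases k)
      case 0 then show ?thesis using smooth_diff Suc.prems by auto
    next
      case (Suc k')
      then have "Dn k (\<lambda>t. f t * g t) = Dn k' (\<lambda>t. deriv f t * g t + f t * deriv g t)"
        using eq by (simp add: Dn_Suc' del: funpow.simps)
      also have "\<dots> = (\<lambda>t. Dn k' (\<lambda>t. deriv f t * g t) t + Dn k' (\<lambda>t. f t * deriv g t) t)"
        using Dn_add[OF A B, of k'] Suc k by simp
      finally have E: "Dn k (\<lambda>t. f t * g t) = (\<lambda>t. Dn k' (\<lambda>t. deriv f t * g t) t + Dn k' (\<lambda>t. f t * deriv g t) t)" .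
      have "k' \<le> n" using Suc k by simp
      then have "Dn k' (\<lambda>t. deriv f t * g t) differentiable at t" "Dn k' (\<lambda>t. f t * deriv g t) differentiable at t"
        using A B unfolding sm_def by auto
      then have "(\<lambda>t. Dn k' (\<lambda>t. deriv f t * g t) t + Dn k' (\<lambda>t. f t * deriv g t) t) differentiable at t"
        by (rule differentiable_add)
      then show ?thesis using E by simp
    qed
  qed
qed

lemma smooth_mult: "smooth f \<Longrightarrow> smooth g \<Longrightarrow> smooth (\<lambda>t. f t * g t)"
  using sm_mult smooth_sm by blast

lemma smooth_const: "smooth (\<lambda>t. c)"
proof -
  have "Dn (Suc n) (\<lambda>t. c) = (\<lambda>t. 0)" for n
    by (induction n) auto
  then show ?thesis unfolding smooth_def by (metis funpow_0 differentiable_const not0_implies_Suc)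
qed

lemma smooth_cmult: "smooth f \<Longrightarrow> smooth (\<lambda>t. c * f t)"
  using smooth_mult[OF smooth_const] by blast

lemma Dn_affine:
  assumes "smooth f"
  shows "Dn n (\<lambda>t. f (s * t + c)) = (\<lambda>t. s ^ n * Dn n f (s * t + c))"
proof (induction n)
  case 0 then show ?case by simp
next
  case (Suc n)
  have d: "(Dn n f has_real_derivative Dn (Suc n) f u) (at u)" for u
    using assms unfolding smooth_def by (metis DERIV_deriv_iff_real_differentiable Dn_Suc)
  have "((\<lambda>t. s ^ n * Dn n f (s * t + c)) has_real_derivative s ^ n * (Dn (Suc n) f (s * t + c) * s)) (at t)" for t
    by (intro DERIV_cmult DERIV_chain2[OF d]) (auto intro!: derivative_eq_intros)
  then have "deriv (\<lambda>t. s ^ n * Dn n f (s * t + c)) t = s ^ n * (Dn (Suc n) f (s * t + c) * s)" for t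
    by (rule DERIV_imp_deriv)
  then have "deriv (\<lambda>t. s ^ n * Dn n f (s * t + c)) t = s ^ Suc n * Dn (Suc n) f (s * t + c)" for t
    by (simp add: algebra_simps del: funpow.simps)
  then have h: "deriv (\<lambda>t. s ^ n * Dn n f (s * t + c)) = (\<lambda>t. s ^ Suc n * Dn (Suc n) f (s * t + c))"
    by (intro ext)
  have "Dn (Suc n) (\<lambda>t. f (s * t + c)) = deriv (Dn n (\<lambda>t. f (s * t + c)))" by (rule Dn_Suc)
  also have "\<dots> = deriv (\<lambda>t. s ^ n * Dn n f (s * t + c))" using Suc.IH by simp
  finally show ?case using h by simp
qed

lemma smooth_affine: "smooth f \<Longrightarrow> smooth (\<lambda>t. f (s * t + c))"
proof -
  assume a: "smooth f"
  have "((\<lambda>t. s ^ n * Dn n f (s * t + c))) differentiable at t" for n t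
  proof -
    have "(Dn n f has_real_derivative Dn (Suc n) f u) (at u)" for u
      using a unfolding smooth_def by (metis DERIV_deriv_iff_real_differentiable Dn_Suc)
    then have "((\<lambda>t. s ^ n * Dn n f (s * t + c)) has_real_derivative s ^ n * (Dn (Suc n) f (s * t + c) * s)) (at t)"
      by (intro DERIV_cmult DERIV_chain2[where g="\<lambda>t. s*t+c"]) (auto intro!: derivative_eq_intros)
    then show ?thesis using real_differentiable_def by blast
  qed
  then show ?thesis unfolding smooth_def Dn_affine[OF a] by blast
qed

definition bump :: "real \<Rightarrow> real \<Rightarrow> real \<Rightarrow> real" where
  "bump a b t = psi (t - a) * psi (b - t)"

lemma smooth_bump: "smooth (bump a b)"
proof -
  have "smooth (\<lambda>t. psi (1 * t + - a))" "smooth (\<lambda>t. psi ((-1) * t + b))"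
    using smooth_affine smooth_psi by blast+
  then have "smooth (\<lambda>t. psi (1 * t + - a) * psi ((-1) * t + b))" by (rule smooth_mult)
  then show ?thesis unfolding bump_def by simp
qed

lemma bump_pos: "a < t \<Longrightarrow> t < b \<Longrightarrow> bump a b t > 0"
  by (simp add: bump_def psi_def bk_def)

lemma bump_nonneg: "bump a b t \<ge> 0"
  by (simp add: bump_def psi_def bk_def)

lemma bump_zero: "t \<notin> {a<..<b} \<Longrightarrow> bump a b t = 0"
  by (auto simp: bump_def psi_def bk_def)

lemma smooth_C_inf: "smooth f \<Longrightarrow> C_inf_on I f"
  unfolding smooth_def C_inf_on_def by blast

lemma deriv_local:
  fixes f g :: "real \<Rightarrow> real"
  assumes "open S" "t \<in> S" "\<And>s. s \<in> S \<Longrightarrow> f s = g s" "(g has_real_derivative D) (at t)"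
  shows "deriv f t = D"
proof -
  have "(f has_real_derivative D) (at t)"
    using has_field_derivative_transform_within_open[OF assms(4) assms(1,2)] assms(3) by metis
  then show ?thesis by (rule DERIV_imp_deriv)
qed

lemma quot_deriv:
  fixes N \<sigma> :: "real \<Rightarrow> real"
  assumes "(N has_real_derivative N') (at t)" "(\<sigma> has_real_derivative \<sigma> t * r) (at t)" "\<sigma> t \<noteq> 0"
  shows "((\<lambda>s. N s / \<sigma> s ^ k) has_real_derivative (N' - real k * N t * r) / \<sigma> t ^ k) (at t)"
proof -
  have "((\<lambda>s. N s / \<sigma> s ^ k) has_real_derivative
      (N' * \<sigma> t ^ k - N t * (real k * \<sigma> t ^ (k - 1) * (\<sigma> t * r))) / (\<sigma> t ^ k * \<sigma> t ^ k)) (at t)"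
    using assms by (auto intro!: derivative_eq_intros)
  moreover have "(N' * \<sigma> t ^ k - N t * (real k * \<sigma> t ^ (k - 1) * (\<sigma> t * r))) / (\<sigma> t ^ k * \<sigma> t ^ k)
      = (N' - real k * N t * r) / \<sigma> t ^ k"
  proof (cases k)
    case 0 then show ?thesis by simp
  next
    case (Suc m)
    then show ?thesis using assms(3) by (simp add: field_simps)
  qed
  ultimately show ?thesis by simp
qed

definition Gf :: "real \<Rightarrow> real \<Rightarrow> real \<Rightarrow> real \<Rightarrow> real \<Rightarrow> real \<Rightarrow> real \<Rightarrow> real \<Rightarrow> real" where
  "Gf x1 y1 x2 y2 x3 y3 x4 y4 =
     ((x2*y3 - y2*x3 + (x2*y3 + x1*y4 - y2*x3 - y1*x4)/3) / (x1*y2 - y1*x2)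
       - 5/9 * (x1*y3 - y1*x3)^2 / (x1*y2 - y1*x2)^2) / (x1*y2 - y1*x2) powr (1/3)"

lemma component_lemma:
  fixes X Y Z Z1 Z2 Z3 \<sigma> r r' :: "real \<Rightarrow> real"
  assumes S: "open S"
    and dZ: "\<And>t. t \<in> S \<Longrightarrow> (Z has_real_derivative Z1 t) (at t)"
      "\<And>t. t \<in> S \<Longrightarrow> (Z1 has_real_derivative Z2 t) (at t)"
      "\<And>t. t \<in> S \<Longrightarrow> (Z2 has_real_derivative Z3 t) (at t)"
    and sp: "\<And>t. t \<in> S \<Longrightarrow> \<sigma> t > 0"
    and dsig: "\<And>t. t \<in> S \<Longrightarrow> (\<sigma> has_real_derivative \<sigma> t * r t) (at t)"
    and dr: "\<And>t. t \<in> S \<Longrightarrow> (r has_real_derivative r' t) (at t)"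
    and spd: "\<And>t. t \<in> S \<Longrightarrow> ea_speed X Y t = \<sigma> t"
    and t: "t \<in> S"
  shows "ea_D X Y (ea_D X Y Z) t = (Z2 t - Z1 t * r t) / \<sigma> t ^ 2"
    "ea_D X Y (ea_D X Y (ea_D X Y Z)) t =
       (Z3 t - 3 * Z2 t * r t - Z1 t * r' t + 2 * Z1 t * r t ^ 2) / \<sigma> t ^ 3"
proof -
  have e1: "ea_D X Y Z s = Z1 s / \<sigma> s ^ 1" if "s \<in> S" for s
    using that spd DERIV_imp_deriv[OF dZ(1)] by (simp add: ea_D_def)
  have d1: "deriv (ea_D X Y Z) s = (Z2 s - real 1 * Z1 s * r s) / \<sigma> s ^ 1" if "s \<in> S" for s
  proof -
    have "((\<lambda>s. Z1 s / \<sigma> s ^ 1) has_real_derivative (Z2 s - real 1 * Z1 s * r s) / \<sigma> s ^ 1) (at s)"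
      by (rule quot_deriv[OF dZ(2)[OF that] dsig[OF that]]) (use sp[OF that] in auto)
    from deriv_local[OF S that e1 this] show ?thesis .
  qed
  have e2: "ea_D X Y (ea_D X Y Z) s = (Z2 s - Z1 s * r s) / \<sigma> s ^ 2" if "s \<in> S" for s
    using that d1[OF that] spd[OF that] sp[OF that]
    by (simp add: ea_D_def power2_eq_square)
  then show "ea_D X Y (ea_D X Y Z) t = (Z2 t - Z1 t * r t) / \<sigma> t ^ 2" using t .
  have dN: "((\<lambda>s. Z2 s - Z1 s * r s) has_real_derivative Z3 t - (Z2 t * r t + Z1 t * r' t)) (at t)"
    using t by (auto intro!: derivative_eq_intros dZ dr)
  have d2: "deriv (ea_D X Y (ea_D X Y Z)) t
      = (Z3 t - (Z2 t * r t + Z1 t * r' t) - real 2 * (Z2 t - Z1 t * r t) * r t) / \<sigma> t ^ 2"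
  proof -
    have "((\<lambda>s. (Z2 s - Z1 s * r s) / \<sigma> s ^ 2) has_real_derivative
       (Z3 t - (Z2 t * r t + Z1 t * r' t) - real 2 * (Z2 t - Z1 t * r t) * r t) / \<sigma> t ^ 2) (at t)"
      by (rule quot_deriv[OF dN dsig[OF t]]) (use sp[OF t] in auto)
    from deriv_local[OF S t e2 this] show ?thesis .
  qed
  show "ea_D X Y (ea_D X Y (ea_D X Y Z)) t =
       (Z3 t - 3 * Z2 t * r t - Z1 t * r' t + 2 * Z1 t * r t ^ 2) / \<sigma> t ^ 3"
    using d2 spd[OF t] sp[OF t]
    by (simp add: ea_D_def field_simps power2_eq_square power3_eq_cube)
qed

lemma curv_formula:
  fixes X Y X1 X2 X3 X4 Y1 Y2 Y3 Y4 :: "real \<Rightarrow> real"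
  assumes S: "open S"
    and dX: "\<And>t. t \<in> S \<Longrightarrow> (X has_real_derivative X1 t) (at t)"
      "\<And>t. t \<in> S \<Longrightarrow> (X1 has_real_derivative X2 t) (at t)"
      "\<And>t. t \<in> S \<Longrightarrow> (X2 has_real_derivative X3 t) (at t)"
      "\<And>t. t \<in> S \<Longrightarrow> (X3 has_real_derivative X4 t) (at t)"
    and dY: "\<And>t. t \<in> S \<Longrightarrow> (Y has_real_derivative Y1 t) (at t)"
      "\<And>t. t \<in> S \<Longrightarrow> (Y1 has_real_derivative Y2 t) (at t)"
      "\<And>t. t \<in> S \<Longrightarrow> (Y2 has_real_derivative Y3 t) (at t)"
      "\<And>t. t \<in> S \<Longrightarrow> (Y3 has_real_derivative Y4 t) (at t)"
    and pos: "\<And>t. t \<in> S \<Longrightarrow> X1 t * Y2 t - Y1 t * X2 t > 0"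
    and t: "t \<in> S"
  shows "ea_curv_gen X Y t * ea_speed X Y t =
         Gf (X1 t) (Y1 t) (X2 t) (Y2 t) (X3 t) (Y3 t) (X4 t) (Y4 t)"
proof -
  define P where "P s = X1 s * Y2 s - Y1 s * X2 s" for s
  define P1 where "P1 s = X1 s * Y3 s - Y1 s * X3 s" for s
  define P2 where "P2 s = X2 s * Y3 s + X1 s * Y4 s - Y2 s * X3 s - Y1 s * X4 s" for s
  define \<sigma> where "\<sigma> s = P s powr (1/3)" for s
  define r where "r s = P1 s / (3 * P s)" for s
  define r' where "r' s = (P2 s * P s - P1 s ^ 2) / (3 * P s ^ 2)" for s
  have Pp: "s \<in> S \<Longrightarrow> P s > 0" for s using pos P_def by simp
  have sp: "s \<in> S \<Longrightarrow> \<sigma> s > 0" for s using Pp[of s] \<sigma>_def by simp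
  have dP: "(P has_real_derivative P1 s) (at s)" if s: "s \<in> S" for s
  proof -
    have "(P has_real_derivative X2 s * Y2 s + X1 s * Y3 s - (Y2 s * X2 s + Y1 s * X3 s)) (at s)"
      unfolding P_def[abs_def] using s by (auto intro!: derivative_eq_intros dX dY)
    then show ?thesis by (simp add: P1_def algebra_simps)
  qed
  have dP1: "(P1 has_real_derivative P2 s) (at s)" if s: "s \<in> S" for s
  proof -
    have "(P1 has_real_derivative X2 s * Y3 s + X1 s * Y4 s - (Y2 s * X3 s + Y1 s * X4 s)) (at s)"
      unfolding P1_def[abs_def] using s by (auto intro!: derivative_eq_intros dX dY)
    then show ?thesis by (simp add: P2_def algebra_simps)
  qed
  have dsig: "(\<sigma> has_real_derivative \<sigma> s * r s) (at s)" if s: "s \<in> S" for s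
  proof -
    have "(\<sigma> has_real_derivative (P s powr (1/3)) * (0 * ln (P s) + P1 s * (1/3) / P s)) (at s)"
      unfolding \<sigma>_def[abs_def] by (rule DERIV_powr[OF dP[OF s] Pp[OF s] DERIV_const])
    then show ?thesis using Pp[OF s] by (simp add: \<sigma>_def r_def)
  qed
  have dr: "(r has_real_derivative r' s) (at s)" if s: "s \<in> S" for s
  proof -
    have "(r has_real_derivative (P2 s * (3 * P s) - P1 s * (3 * P1 s)) / (3 * P s * (3 * P s))) (at s)"
    proof -
      have "P s \<noteq> 0" using Pp[OF s] by simp
      then show ?thesis unfolding r_def[abs_def] using s by (auto intro!: derivative_eq_intros dP dP1)
    qed
    moreover have "(P2 s * (3 * P s) - P1 s * (3 * P1 s)) / (3 * P s * (3 * P s)) = r' s"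
      using Pp[OF s] unfolding r'_def by (simp add: divide_simps power2_eq_square)
    ultimately show ?thesis by simp
  qed
  have spd: "ea_speed X Y s = \<sigma> s" if s: "s \<in> S" for s
  proof -
    have "deriv X s = X1 s" "deriv Y s = Y1 s" using dX(1)[OF s] dY(1)[OF s] DERIV_imp_deriv by blast+
    moreover have "deriv (deriv X) s = X2 s"
      by (rule deriv_local[OF S s _ dX(2)[OF s]]) (use dX(1) DERIV_imp_deriv in blast)
    moreover have "deriv (deriv Y) s = Y2 s"
      by (rule deriv_local[OF S s _ dY(2)[OF s]]) (use dY(1) DERIV_imp_deriv in blast)
    ultimately show ?thesis by (simp add: ea_speed_def det2_def \<sigma>_def P_def)
  qed
  note cx = component_lemma[OF S dX(1-3) sp dsig dr spd t]
  note cy = component_lemma[OF S dY(1-3) sp dsig dr spd t]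
  have s3: "\<sigma> t ^ 3 = P t"
  proof -
    have "\<sigma> t ^ 3 = (P t powr (1/3)) powr 3" using sp[OF t] by (simp add: \<sigma>_def powr_realpow)
    also have "\<dots> = P t" using Pp[OF t] by (simp add: powr_powr)
    finally show ?thesis .
  qed
  have lhs: "ea_curv_gen X Y t * ea_speed X Y t =
     ((X2 t - X1 t * r t) * (Y3 t - 3 * Y2 t * r t - Y1 t * r' t + 2 * Y1 t * r t ^ 2)
     - (Y2 t - Y1 t * r t) * (X3 t - 3 * X2 t * r t - X1 t * r' t + 2 * X1 t * r t ^ 2)) / (P t * \<sigma> t)"
  proof -
    have "ea_curv_gen X Y t = det2 ((X2 t - X1 t * r t) / \<sigma> t ^ 2) ((Y2 t - Y1 t * r t) / \<sigma> t ^ 2)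
       ((X3 t - 3 * X2 t * r t - X1 t * r' t + 2 * X1 t * r t ^ 2) / \<sigma> t ^ 3)
       ((Y3 t - 3 * Y2 t * r t - Y1 t * r' t + 2 * Y1 t * r t ^ 2) / \<sigma> t ^ 3)"
      unfolding ea_curv_gen_def by (simp only: cx cy)
    also have "\<dots> = ((X2 t - X1 t * r t) * (Y3 t - 3 * Y2 t * r t - Y1 t * r' t + 2 * Y1 t * r t ^ 2)
     - (Y2 t - Y1 t * r t) * (X3 t - 3 * X2 t * r t - X1 t * r' t + 2 * X1 t * r t ^ 2)) / (\<sigma> t ^ 2 * \<sigma> t ^ 3)"
      unfolding det2_def using sp[OF t] by (simp add: field_simps)
    also have "\<sigma> t ^ 2 * \<sigma> t ^ 3 = (P t * \<sigma> t) * \<sigma> t"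
      using s3 by (simp add: power2_eq_square power3_eq_cube algebra_simps)
    finally show ?thesis unfolding spd[OF t] using sp[OF t] Pp[OF t]
      by (simp add: divide_simps) (simp add: algebra_simps)
  qed
  have rr: "P1 t = 3 * P t * r t" using Pp[OF t] by (simp add: r_def)
  have E1: "(X2 t - X1 t * r t) * (Y3 t - 3 * Y2 t * r t - Y1 t * r' t + 2 * Y1 t * r t ^ 2)
     - (Y2 t - Y1 t * r t) * (X3 t - 3 * X2 t * r t - X1 t * r' t + 2 * X1 t * r t ^ 2)
     = (X2 t * Y3 t - Y2 t * X3 t) + r' t * P t - 2 * r t ^ 2 * P t - r t * P1 t + 3 * r t ^ 2 * P t"
    unfolding P_def P1_def by (simp add: algebra_simps power2_eq_square)
  have E2: "(X2 t * Y3 t - Y2 t * X3 t) + r' t * P t - 2 * r t ^ 2 * P t - r t * P1 t + 3 * r t ^ 2 * P t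
     = (X2 t * Y3 t - Y2 t * X3 t) + P t * (r' t - 2 * r t ^ 2)"
    unfolding rr by (simp add: algebra_simps power2_eq_square)
  have G: "Gf (X1 t) (Y1 t) (X2 t) (Y2 t) (X3 t) (Y3 t) (X4 t) (Y4 t) =
     ((X2 t * Y3 t - Y2 t * X3 t + P2 t / 3) / P t - 5/9 * P1 t ^ 2 / P t ^ 2) / \<sigma> t"
    by (simp add: Gf_def P_def P1_def P2_def \<sigma>_def)
  have F: "((X2 t * Y3 t - Y2 t * X3 t) + P t * (r' t - 2 * r t ^ 2)) / P t
      = (X2 t * Y3 t - Y2 t * X3 t + P2 t / 3) / P t - 5/9 * P1 t ^ 2 / P t ^ 2"
    using Pp[OF t] unfolding r_def r'_def by (simp add: field_simps power2_eq_square)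
  show ?thesis unfolding lhs E1 E2 G using F[symmetric] sp[OF t] Pp[OF t]
    by (simp add: divide_simps)
qed

lemma Cinf_deriv:
  assumes "C_inf_on I f" "open I" "t \<in> I"
  shows "(Dn n f has_real_derivative Dn (Suc n) f t) (at t)"
  using assms unfolding C_inf_on_def by (metis DERIV_deriv_iff_real_differentiable Dn_Suc)

lemma Cinf_cont:
  assumes "C_inf_on I f" "open I"
  shows "continuous_on I (Dn n f)"
proof -
  have "\<forall>t\<in>I. isCont (Dn n f) t"
    using Cinf_deriv[OF assms] DERIV_isCont by blast
  then show ?thesis by (simp add: continuous_at_imp_continuous_on)
qed

lemma Cinf_cont_sub:
  assumes "C_inf_on I f" "open I" "S \<subseteq> I"
  shows "continuous_on S (Dn n f)"
  using Cinf_cont[OF assms(1,2)] assms(3) continuous_on_subset by blast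

lemma Dn_vanish:
  assumes "open Ov" "\<And>s. s \<in> Ov \<Longrightarrow> f s = 0" "s \<in> Ov"
  shows "Dn k f s = 0"
  using assms(3)
proof (induction k arbitrary: s)
  case 0 then show ?case using assms(2) by simp
next
  case (Suc k)
  have "deriv (Dn k f) s = 0"
    by (rule deriv_local[OF assms(1) Suc.prems, of _ "\<lambda>_. 0"]) (auto simp: Suc.IH)
  then show ?case by simp
qed

lemma zero_at_left:
  fixes f :: "real \<Rightarrow> real"
  assumes "isCont f a" "e > 0" "\<And>s. a - e < s \<Longrightarrow> s < a \<Longrightarrow> f s = 0"
  shows "f a = 0"
proof -
  have "(f \<longlongrightarrow> f a) (at_left a)" using assms(1) continuous_at filterlim_at_split by blast
  moreover have "\<forall>\<^sub>F s in at_left a. s \<in> {a - e<..<a}"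
    by (rule eventually_at_left_real) (use assms(2) in simp)
  then have "\<forall>\<^sub>F s in at_left a. f s = 0"
    by eventually_elim (use assms(3) in auto)
  then have "(f \<longlongrightarrow> 0) (at_left a)" by (simp add: tendsto_eventually)
  ultimately show ?thesis using tendsto_unique trivial_limit_at_left_real by blast
qed

lemma zero_at_right:
  fixes f :: "real \<Rightarrow> real"
  assumes "isCont f a" "e > 0" "\<And>s. a < s \<Longrightarrow> s < a + e \<Longrightarrow> f s = 0"
  shows "f a = 0"
proof -
  have "(f \<longlongrightarrow> f a) (at_right a)" using assms(1) continuous_at filterlim_at_split by blast
  moreover have "\<forall>\<^sub>F s in at_right a. s \<in> {a<..<a + e}"
    by (rule eventually_at_right_real) (use assms(2) in simp)
  then have "\<forall>\<^sub>F s in at_right a. f s = 0"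
    by eventually_elim (use assms(3) in auto)
  then have "(f \<longlongrightarrow> 0) (at_right a)" by (simp add: tendsto_eventually)
  ultimately show ?thesis using tendsto_unique trivial_limit_at_right_real by blast
qed

lemma adm_vanish:
  assumes I: "open I" and adm: "admissible_var I v1 v2 a b"
    and t: "t \<in> I" "t \<notin> {a<..<b}"
  shows "Dn k v1 t = 0" "Dn k v2 t = 0"
proof -
  have ab: "a \<in> I" "b \<in> I" "a < b" "C_inf_on I v1" "C_inf_on I v2"
    and z: "\<And>t. t \<in> I \<Longrightarrow> t \<notin> {a..b} \<Longrightarrow> v1 t = 0 \<and> v2 t = 0"
    using adm unfolding admissible_var_def by auto
  define Ov where "Ov = I - {a..b}"
  have Ov: "open Ov" unfolding Ov_def using I by auto
  have v0: "s \<in> Ov \<Longrightarrow> Dn k v1 s = 0 \<and> Dn k v2 s = 0" for s k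
    using Dn_vanish[OF Ov, of v1 s k] Dn_vanish[OF Ov, of v2 s k] z unfolding Ov_def by auto
  have "Dn k v1 t = 0 \<and> Dn k v2 t = 0"
  proof (cases "t \<in> Ov")
    case True then show ?thesis using v0 by blast
  next
    case False
    then have "t = a \<or> t = b" using t unfolding Ov_def by auto
    then show ?thesis
    proof
      assume ta: "t = a"
      obtain e where e: "e > 0" "ball a e \<subseteq> I" using I ab(1) open_contains_ball by blast
      have inO: "a - e < s \<Longrightarrow> s < a \<Longrightarrow> s \<in> Ov" for s
        using e unfolding Ov_def by (auto simp: dist_real_def subset_iff)
      have c: "isCont (Dn k v1) a" "isCont (Dn k v2) a"
        using Cinf_deriv[OF ab(4) I ab(1)] Cinf_deriv[OF ab(5) I ab(1)] DERIV_isCont by blast+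
      show ?thesis unfolding ta using zero_at_left[OF c(1) e(1)] zero_at_left[OF c(2) e(1)] inO v0 by blast
    next
      assume tb: "t = b"
      obtain e where e: "e > 0" "ball b e \<subseteq> I" using I ab(2) open_contains_ball by blast
      have inO: "b < s \<Longrightarrow> s < b + e \<Longrightarrow> s \<in> Ov" for s
        using e unfolding Ov_def by (auto simp: dist_real_def subset_iff)
      have c: "isCont (Dn k v1) b" "isCont (Dn k v2) b"
        using Cinf_deriv[OF ab(4) I ab(2)] Cinf_deriv[OF ab(5) I ab(2)] DERIV_isCont by blast+
      show ?thesis unfolding tb using zero_at_right[OF c(1) e(1)] zero_at_right[OF c(2) e(1)] inO v0 by blast
    qed
  qed
  then show "Dn k v1 t = 0" "Dn k v2 t = 0" by auto
qed

definition Gg :: "real \<Rightarrow> real \<Rightarrow> real \<Rightarrow> real \<Rightarrow> real" where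
  "Gg A P P1 P2 = ((A + P2/3)/P - 5/9 * P1^2/P^2) / P powr (1/3)"

definition GgD :: "real \<Rightarrow> real \<Rightarrow> real \<Rightarrow> real \<Rightarrow> real \<Rightarrow> real \<Rightarrow> real \<Rightarrow> real \<Rightarrow> real" where
  "GgD A P P1 P2 A' P' P1' P2' =
    (((A' + P2'/3)/P - (A + P2/3)*P'/P^2 - 5/9*(2*P1*P1'/P^2 - 2*P1^2*P'/P^3))
      - ((A + P2/3)/P - 5/9*P1^2/P^2) * (P'/(3*P))) / P powr (1/3)"

lemma Gf_Gg: "Gf x1 y1 x2 y2 x3 y3 x4 y4 =
  Gg (x2*y3 - y2*x3) (x1*y2 - y1*x2) (x1*y3 - y1*x3) (x2*y3 + x1*y4 - y2*x3 - y1*x4)"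
  by (simp add: Gf_def Gg_def)

lemma Gg_deriv:
  fixes fA fP fP1 fP2 :: "real \<Rightarrow> real"
  assumes dA: "(fA has_real_derivative A') (at e)" and dP: "(fP has_real_derivative P') (at e)"
    and dP1: "(fP1 has_real_derivative P1') (at e)" and dP2: "(fP2 has_real_derivative P2') (at e)"
    and pos: "fP e > 0"
  shows "((\<lambda>e. Gg (fA e) (fP e) (fP1 e) (fP2 e)) has_real_derivative
          GgD (fA e) (fP e) (fP1 e) (fP2 e) A' P' P1' P2') (at e)"
proof -
  define N where "N e = (fA e + fP2 e/3)/fP e - 5/9*fP1 e^2/fP e^2" for e
  define \<sigma> where "\<sigma> e = fP e powr (1/3)" for e
  have ne: "fP e \<noteq> 0" using pos by simp
  have dN: "(N has_real_derivative ((A' + P2'/3)/fP e - (fA e + fP2 e/3)*P'/fP e^2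
      - 5/9*(2*fP1 e*P1'/fP e^2 - 2*fP1 e^2*P'/fP e^3))) (at e)"
    unfolding N_def[abs_def] using ne
    by (auto intro!: derivative_eq_intros dA dP dP1 dP2 simp: field_simps power2_eq_square power3_eq_cube)
  have ds: "(\<sigma> has_real_derivative \<sigma> e * (P'/(3 * fP e))) (at e)"
  proof -
    have "(\<sigma> has_real_derivative (fP e powr (1/3)) * (0 * ln (fP e) + P' * (1/3) / fP e)) (at e)"
      unfolding \<sigma>_def[abs_def] by (rule DERIV_powr[OF dP pos DERIV_const])
    then show ?thesis by (simp add: \<sigma>_def)
  qed
  have sne: "\<sigma> e \<noteq> 0" using pos by (simp add: \<sigma>_def)
  have "((\<lambda>s. N s / \<sigma> s ^ 1) has_real_derivative
      (((A' + P2'/3)/fP e - (fA e + fP2 e/3)*P'/fP e^2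
      - 5/9*(2*fP1 e*P1'/fP e^2 - 2*fP1 e^2*P'/fP e^3)) - real 1 * N e * (P'/(3 * fP e))) / \<sigma> e ^ 1) (at e)"
    by (rule quot_deriv[OF dN ds sne])
  then show ?thesis by (simp add: Gg_def GgD_def N_def \<sigma>_def)
qed

definition Pl :: "real \<Rightarrow> real \<Rightarrow> real \<Rightarrow> real \<Rightarrow> real \<Rightarrow> real \<Rightarrow> real \<Rightarrow> real \<Rightarrow> real \<Rightarrow> real" where
  "Pl x1 y1 x2 y2 u1 w1 u2 w2 e = (x1 + e*u1) * (y2 + e*w2) - (y1 + e*w1) * (x2 + e*u2)"

definition PlD :: "real \<Rightarrow> real \<Rightarrow> real \<Rightarrow> real \<Rightarrow> real \<Rightarrow> real \<Rightarrow> real \<Rightarrow> real \<Rightarrow> real \<Rightarrow> real" where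
  "PlD x1 y1 x2 y2 u1 w1 u2 w2 e = u1 * (y2 + e*w2) + (x1 + e*u1) * w2 - (w1 * (x2 + e*u2) + (y1 + e*w1) * u2)"

lemma Pl_deriv: "((\<lambda>e. Pl x1 y1 x2 y2 u1 w1 u2 w2 e) has_real_derivative PlD x1 y1 x2 y2 u1 w1 u2 w2 e) (at e)"
  unfolding Pl_def PlD_def by (auto intro!: derivative_eq_intros simp: algebra_simps)

definition GfL where
  "GfL x1 y1 x2 y2 x3 y3 x4 y4 u1 w1 u2 w2 u3 w3 u4 w4 e =
    GgD (Pl x2 y2 x3 y3 u2 w2 u3 w3 e) (Pl x1 y1 x2 y2 u1 w1 u2 w2 e) (Pl x1 y1 x3 y3 u1 w1 u3 w3 e)
        (Pl x2 y2 x3 y3 u2 w2 u3 w3 e + Pl x1 y1 x4 y4 u1 w1 u4 w4 e)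
        (PlD x2 y2 x3 y3 u2 w2 u3 w3 e) (PlD x1 y1 x2 y2 u1 w1 u2 w2 e) (PlD x1 y1 x3 y3 u1 w1 u3 w3 e)
        (PlD x2 y2 x3 y3 u2 w2 u3 w3 e + PlD x1 y1 x4 y4 u1 w1 u4 w4 e)"

lemma Gf_line:
  "Gf (x1 + e*u1) (y1 + e*w1) (x2 + e*u2) (y2 + e*w2) (x3 + e*u3) (y3 + e*w3) (x4 + e*u4) (y4 + e*w4) =
   Gg (Pl x2 y2 x3 y3 u2 w2 u3 w3 e) (Pl x1 y1 x2 y2 u1 w1 u2 w2 e) (Pl x1 y1 x3 y3 u1 w1 u3 w3 e)
        (Pl x2 y2 x3 y3 u2 w2 u3 w3 e + Pl x1 y1 x4 y4 u1 w1 u4 w4 e)"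
  unfolding Gf_Gg Pl_def by (simp add: algebra_simps)

lemma Gf_line_deriv:
  assumes "Pl x1 y1 x2 y2 u1 w1 u2 w2 e > 0"
  shows "((\<lambda>e. Gf (x1 + e*u1) (y1 + e*w1) (x2 + e*u2) (y2 + e*w2) (x3 + e*u3) (y3 + e*w3) (x4 + e*u4) (y4 + e*w4))
    has_real_derivative GfL x1 y1 x2 y2 x3 y3 x4 y4 u1 w1 u2 w2 u3 w3 u4 w4 e) (at e)"
  unfolding Gf_line GfL_def
  by (intro Gg_deriv Pl_deriv DERIV_add assms)

lemma master:
  fixes x1 x2 x3 x4 x5 y1 y2 y3 y4 y5 u0 u1 u2 u3 u4 w0 w1 w2 w3 w4 :: real
  assumes R1: "x1*y2 - y1*x2 = 1" and R2: "x1*y3 - y1*x3 = 0"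
    and R3: "x2*y3 + x1*y4 - y2*x3 - y1*x4 = 0" and R4: "2*(x2*y4 - y2*x4) + x1*y5 - y1*x5 = 0"
  shows "GfL x1 y1 x2 y2 x3 y3 x4 y4 u1 w1 u2 w2 u3 w3 u4 w4 0 = 2/3 * (1 * (x1 * w0 - y1 * u0)) * ((x3 * y4 + x2 * y5 - y3 * x4 - y2 * x5) + (x2 * y3 - y2 * x3)^2) + ((1 * (x1 * w4 - y1 * u4) + 4 * (x2 * w3 - y2 * u3) + 6 * (x3 * w2 - y3 * u2) + 4 * (x4 * w1 - y4 * u1) + 1 * (x5 * w0 - y5 * u0))/3 + 2*(x2 * y4 - y2 * x4)*(1 * (x1 * w1 - y1 * u1) + 1 * (x2 * w0 - y2 * u0)) + 2*(x2 * y3 - y2 * x3)*(1 * (x1 * w2 - y1 * u2) + 2 * (x2 * w1 - y2 * u1) + 1 * (x3 * w0 - y3 * u0)) - (x3 * y4 + x2 * y5 - y3 * x4 - y2 * x5)*(1 * (x1 * w0 - y1 * u0))/3 - (x2 * y4 - y2 * x4)*(1 * (x1 * w1 - y1 * u1) + 1 * (x2 * w0 - y2 * u0))/3 + (x2 * y4 - y2 * x4)*(1 * (u0 * y2 - w0 * x2)) + (x2 * y3 - y2 * x3)*(1 * (u1 * y2 - w1 * x2) + 1 * (u0 * y3 - w0 * x3)))"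
proof -
  obtain k where hk: "k = x2 * y3 - y2 * x3" by blast
  obtain k1 where hk1: "k1 = x2 * y4 - y2 * x4" by blast
  obtain k2 where hk2: "k2 = x3 * y4 + x2 * y5 - y3 * x4 - y2 * x5" by blast
  have e3: "x3 = -k*x1" "y3 = -k*y1" using hk R1 R2 by algebra+
  have e4: "x4 = -k1*x1 - k*x2" "y4 = -k1*y1 - k*y2" using hk hk1 R1 R3 e3 by algebra+
  have e5: "x5 = -k2*x1 - 2*k1*x2 + k^2*x1" "y5 = -k2*y1 - 2*k1*y2 + k^2*y1"
    using hk hk1 hk2 R1 R4 e3 e4 by algebra+
  have L: "GfL x1 y1 x2 y2 x3 y3 x4 y4 u1 w1 u2 w2 u3 w3 u4 w4 0 = (u2*y3 + x2*w3 - w2*x3 - y2*u3) + (u2*y3 + x2*w3 + u1*y4 + x1*w4 - w2*x3 - y2*u3 - w1*x4 - y1*u4)/3 - 4/3 * (x2 * y3 - y2 * x3) * (u1*y2 + x1*w2 - w1*x2 - y1*u2)"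
  proof -
    have a: "x1 * y2 - y1 * x2 = 1" "x1 * y3 - y1 * x3 = 0" "x2 * y3 - y2 * x3 + (x1 * y4 - y1 * x4) = 0"
      using R1 R2 R3 by auto
    have p0: "Pl a1 b1 c1 d1 e1 f1 g1 h1 0 = a1 * d1 - b1 * c1" for a1 b1 c1 d1 e1 f1 g1 h1 :: real
      by (simp add: Pl_def)
    have q0: "PlD a1 b1 c1 d1 e1 f1 g1 h1 0 = e1 * d1 + a1 * h1 - (f1 * c1 + b1 * g1)" for a1 b1 c1 d1 e1 f1 g1 h1 :: real
      by (simp add: PlD_def)
    show ?thesis unfolding GfL_def p0 q0 a unfolding GgD_def by (simp add: field_simps)
  qed
  show ?thesis unfolding L hk[symmetric] hk1[symmetric] hk2[symmetric] unfolding e5 e4 e3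
    by (simp add: field_simps power2_eq_square)
qed

definition "F0f x y v1 v2 t = (1 * (Dn 1 x t * v2 t - Dn 1 y t * v1 t))"
definition "F1f x y v1 v2 t = (1 * (Dn 1 x t * Dn 1 v2 t - Dn 1 y t * Dn 1 v1 t) + 1 * (Dn 2 x t * v2 t - Dn 2 y t * v1 t))"
definition "F2f x y v1 v2 t = (1 * (Dn 1 x t * Dn 2 v2 t - Dn 1 y t * Dn 2 v1 t) + 2 * (Dn 2 x t * Dn 1 v2 t - Dn 2 y t * Dn 1 v1 t) + 1 * (Dn 3 x t * v2 t - Dn 3 y t * v1 t))"
definition "F3f x y v1 v2 t = (1 * (Dn 1 x t * Dn 3 v2 t - Dn 1 y t * Dn 3 v1 t) + 3 * (Dn 2 x t * Dn 2 v2 t - Dn 2 y t * Dn 2 v1 t) + 3 * (Dn 3 x t * Dn 1 v2 t - Dn 3 y t * Dn 1 v1 t) + 1 * (Dn 4 x t * v2 t - Dn 4 y t * v1 t))"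
definition "F4f x y v1 v2 t = (1 * (Dn 1 x t * Dn 4 v2 t - Dn 1 y t * Dn 4 v1 t) + 4 * (Dn 2 x t * Dn 3 v2 t - Dn 2 y t * Dn 3 v1 t) + 6 * (Dn 3 x t * Dn 2 v2 t - Dn 3 y t * Dn 2 v1 t) + 4 * (Dn 4 x t * Dn 1 v2 t - Dn 4 y t * Dn 1 v1 t) + 1 * (Dn 5 x t * v2 t - Dn 5 y t * v1 t))"
definition "G0f x y v1 v2 t = (1 * (v1 t * Dn 2 y t - v2 t * Dn 2 x t))"
definition "G1f x y v1 v2 t = (1 * (Dn 1 v1 t * Dn 2 y t - Dn 1 v2 t * Dn 2 x t) + 1 * (v1 t * Dn 3 y t - v2 t * Dn 3 x t))"
definition "Kf x y v1 v2 t = (Dn 2 x t * Dn 3 y t - Dn 2 y t * Dn 3 x t)"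
definition "K1f x y v1 v2 t = (Dn 2 x t * Dn 4 y t - Dn 2 y t * Dn 4 x t)"
definition "K2f x y v1 v2 t = (Dn 3 x t * Dn 4 y t + Dn 2 x t * Dn 5 y t - Dn 3 y t * Dn 4 x t - Dn 2 y t * Dn 5 x t)"

definition "Phif x y v1 v2 t = F3f x y v1 v2 t/3 + 2*Kf x y v1 v2 t*F1f x y v1 v2 t - K1f x y v1 v2 t*F0f x y v1 v2 t/3 + Kf x y v1 v2 t*G0f x y v1 v2 t"
definition "PhiDf x y v1 v2 t = (F4f x y v1 v2 t/3 + 2*K1f x y v1 v2 t*F1f x y v1 v2 t + 2*Kf x y v1 v2 t*F2f x y v1 v2 t - K2f x y v1 v2 t*F0f x y v1 v2 t/3 - K1f x y v1 v2 t*F1f x y v1 v2 t/3 + K1f x y v1 v2 t*G0f x y v1 v2 t + Kf x y v1 v2 t*G1f x y v1 v2 t)"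

lemma Cd:
  assumes "C_inf_on I f" "open I" "t \<in> I"
  shows "(f has_real_derivative Dn 1 f t) (at t)" "(Dn 1 f has_real_derivative Dn 2 f t) (at t)"
    "(Dn 2 f has_real_derivative Dn 3 f t) (at t)" "(Dn 3 f has_real_derivative Dn 4 f t) (at t)"
    "(Dn 4 f has_real_derivative Dn 5 f t) (at t)"
  using Cinf_deriv[OF assms, of 0] Cinf_deriv[OF assms, of 1] Cinf_deriv[OF assms, of 2]
    Cinf_deriv[OF assms, of 3] Cinf_deriv[OF assms, of 4]
  by (simp_all add: eval_nat_numeral del: funpow.simps)

lemma const_deriv_zero:
  fixes f :: "real \<Rightarrow> real"
  assumes "open I" "t \<in> I" "\<And>s. s \<in> I \<Longrightarrow> f s = c" "(f has_real_derivative D) (at t)"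
  shows "D = 0"
proof -
  have "((\<lambda>_. c) has_real_derivative 0) (at t)" by simp
  then have "(f has_real_derivative 0) (at t)"
    by (rule has_field_derivative_transform_within_open[OF _ assms(1,2)]) (use assms(3) in auto)
  then show ?thesis using assms(4) DERIV_unique by blast
qed

context
  fixes x y v1 v2 :: "real \<Rightarrow> real" and I :: "real set" and t :: real
  assumes I: "open I" and Cx: "C_inf_on I x" and Cy: "C_inf_on I y"
    and Cv1: "C_inf_on I v1" and Cv2: "C_inf_on I v2" and t: "t \<in> I"
begin

lemmas dx = Cd[OF Cx I t] and dy = Cd[OF Cy I t] and dv1 = Cd[OF Cv1 I t] and dv2 = Cd[OF Cv2 I t]

lemma F_derivs:
  "(F0f x y v1 v2 has_real_derivative F1f x y v1 v2 t) (at t)"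
  "(F1f x y v1 v2 has_real_derivative F2f x y v1 v2 t) (at t)"
  "(F2f x y v1 v2 has_real_derivative F3f x y v1 v2 t) (at t)"
  "(F3f x y v1 v2 has_real_derivative F4f x y v1 v2 t) (at t)"
  "(G0f x y v1 v2 has_real_derivative G1f x y v1 v2 t) (at t)"
  "(Kf x y v1 v2 has_real_derivative K1f x y v1 v2 t) (at t)"
  "(K1f x y v1 v2 has_real_derivative K2f x y v1 v2 t) (at t)"
  unfolding F0f_def[abs_def] F1f_def[abs_def] F2f_def[abs_def] F3f_def[abs_def] F4f_def[abs_def]
    G0f_def[abs_def] G1f_def[abs_def] Kf_def[abs_def] K1f_def[abs_def] K2f_def[abs_def]
  by (auto intro!: derivative_eq_intros dx[simplified] dy[simplified] dv1[simplified] dv2[simplified] simp: algebra_simps)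

lemma Phi_deriv: "(Phif x y v1 v2 has_real_derivative PhiDf x y v1 v2 t) (at t)"
  unfolding Phif_def[abs_def] PhiDf_def
  by (auto intro!: derivative_eq_intros F_derivs simp: field_simps)

end

lemma cont_Gg:
  assumes "continuous_on S fA" "continuous_on S fP" "continuous_on S fP1" "continuous_on S fP2"
    "\<And>z. z \<in> S \<Longrightarrow> fP z > 0"
  shows "continuous_on S (\<lambda>z. Gg (fA z) (fP z) (fP1 z) (fP2 z))"
proof -
  have ne: "\<forall>z\<in>S. fP z \<noteq> 0" using assms(5) by (metis less_irrefl)
  show ?thesis unfolding Gg_def
    by (intro continuous_intros assms(1-4)) (use ne in auto)
qed

lemma cont_GgD:
  assumes "continuous_on S fA" "continuous_on S fP" "continuous_on S fP1" "continuous_on S fP2"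
    "continuous_on S gA" "continuous_on S gP" "continuous_on S gP1" "continuous_on S gP2"
    "\<And>z. z \<in> S \<Longrightarrow> fP z > 0"
  shows "continuous_on S (\<lambda>z. GgD (fA z) (fP z) (fP1 z) (fP2 z) (gA z) (gP z) (gP1 z) (gP2 z))"
proof -
  have ne: "\<forall>z\<in>S. fP z \<noteq> 0" using assms(9) by (metis less_irrefl)
  show ?thesis unfolding GgD_def
    by (intro continuous_intros assms(1-8)) (use ne in auto)
qed

lemma cont_Pl:
  assumes "continuous_on S a1" "continuous_on S a2" "continuous_on S a3" "continuous_on S a4"
    "continuous_on S a5" "continuous_on S a6" "continuous_on S a7" "continuous_on S a8" "continuous_on S a9"
  shows "continuous_on S (\<lambda>z. Pl (a1 z) (a2 z) (a3 z) (a4 z) (a5 z) (a6 z) (a7 z) (a8 z) (a9 z))"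
    "continuous_on S (\<lambda>z. PlD (a1 z) (a2 z) (a3 z) (a4 z) (a5 z) (a6 z) (a7 z) (a8 z) (a9 z))"
  unfolding Pl_def PlD_def by (intro continuous_intros assms)+

lemma small_bound:
  fixes e q1 q2 B :: real
  assumes "\<bar>e\<bar> \<le> 1" "\<bar>q1\<bar> + \<bar>q2\<bar> \<le> B" "\<bar>e\<bar> * B < 1/4"
  shows "1 + e*q1 + e^2*q2 > 0"
proof -
  have a: "\<bar>e*q1\<bar> = \<bar>e\<bar>*\<bar>q1\<bar>" by (simp add: abs_mult)
  have b: "\<bar>e^2*q2\<bar> = \<bar>e\<bar>*\<bar>e\<bar>*\<bar>q2\<bar>" by (simp add: abs_mult power2_eq_square)
  have c: "\<bar>e\<bar>*\<bar>e\<bar>*\<bar>q2\<bar> \<le> \<bar>e\<bar>*\<bar>q2\<bar>"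
  proof -
    have "\<bar>e\<bar>*\<bar>e\<bar> \<le> \<bar>e\<bar>" using mult_left_mono[OF assms(1), of "\<bar>e\<bar>"] by simp
    then show ?thesis by (rule mult_right_mono) simp
  qed
  have d: "\<bar>e\<bar>*(\<bar>q1\<bar> + \<bar>q2\<bar>) \<le> \<bar>e\<bar>*B" using assms(2) by (simp add: mult_left_mono)
  have "\<bar>e*q1 + e^2*q2\<bar> \<le> \<bar>e*q1\<bar> + \<bar>e^2*q2\<bar>" by (rule abs_triangle_ineq)
  then have "\<bar>e*q1 + e^2*q2\<bar> \<le> \<bar>e\<bar>*B" using a b c d by (simp add: algebra_simps)
  then show ?thesis using assms(3) by linarith
qed

lemma cont_snd:
  assumes "continuous_on T g" "snd ` S \<subseteq> T"
  shows "continuous_on S (\<lambda>z. g (snd z))"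
  using continuous_on_compose2[OF assms(1) continuous_on_snd assms(2)] by simp

lemma variation:
  fixes x y v1 v2 :: "real \<Rightarrow> real" and I :: "real set" and a b :: real
  assumes I: "open I" and Iint: "is_interval I" and Cx: "C_inf_on I x" and Cy: "C_inf_on I y"
    and det1: "\<forall>s\<in>I. det2 (deriv x s) (deriv y s) ((deriv ^^ 2) x s) ((deriv ^^ 2) y s) = 1"
    and adm: "admissible_var I v1 v2 a b"
  shows "(curv_variation x y v1 v2 a b has_real_derivative
           2/3 * integral {a..b} (\<lambda>t. F0f x y v1 v2 t * (K2f x y v1 v2 t + Kf x y v1 v2 t ^ 2))) (at 0)"
proof -
  have aI: "a \<in> I" and bI: "b \<in> I" and ab: "a < b" and Cv1: "C_inf_on I v1" and Cv2: "C_inf_on I v2"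
    using adm unfolding admissible_var_def by auto
  have sub: "{a..b} \<subseteq> I" using mem_is_interval_1_I[OF Iint aI bI] by auto
  note dx = Cd[OF Cx I] and dy = Cd[OF Cy I] and dv1 = Cd[OF Cv1 I] and dv2 = Cd[OF Cv2 I]
  note cx = Cinf_cont_sub[OF Cx I sub] and cy = Cinf_cont_sub[OF Cy I sub]
  note cv1 = Cinf_cont_sub[OF Cv1 I sub] and cv2 = Cinf_cont_sub[OF Cv2 I sub]
  have van: "Dn k v1 t = 0" "Dn k v2 t = 0" if "t \<in> I" "t \<notin> {a<..<b}" for t k
    using adm_vanish[OF I adm that] by auto
  have R1: "Dn 1 x t * Dn 2 y t - Dn 1 y t * Dn 2 x t = 1" if "t \<in> I" for t
    using det1 that by (simp add: det2_def)
  have R2: "Dn 1 x t * Dn 3 y t - Dn 1 y t * Dn 3 x t = 0" if t: "t \<in> I" for t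
  proof -
    have "((\<lambda>s. Dn 1 x s * Dn 2 y s - Dn 1 y s * Dn 2 x s) has_real_derivative
      Dn 2 x t * Dn 2 y t + Dn 1 x t * Dn 3 y t - (Dn 2 y t * Dn 2 x t + Dn 1 y t * Dn 3 x t)) (at t)"
      by (auto intro!: derivative_eq_intros dx[OF t, simplified] dy[OF t, simplified] simp: algebra_simps)
    from const_deriv_zero[OF I t R1 this] show ?thesis by (simp add: algebra_simps)
  qed
  have R3: "Dn 2 x t * Dn 3 y t + Dn 1 x t * Dn 4 y t - Dn 2 y t * Dn 3 x t - Dn 1 y t * Dn 4 x t = 0"
    if t: "t \<in> I" for t
  proof -
    have "((\<lambda>s. Dn 1 x s * Dn 3 y s - Dn 1 y s * Dn 3 x s) has_real_derivative
      Dn 2 x t * Dn 3 y t + Dn 1 x t * Dn 4 y t - (Dn 2 y t * Dn 3 x t + Dn 1 y t * Dn 4 x t)) (at t)"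
      by (auto intro!: derivative_eq_intros dx[OF t, simplified] dy[OF t, simplified] simp: algebra_simps)
    from const_deriv_zero[OF I t R2 this] show ?thesis by (simp add: algebra_simps)
  qed
  have R4: "2 * (Dn 2 x t * Dn 4 y t - Dn 2 y t * Dn 4 x t) + Dn 1 x t * Dn 5 y t - Dn 1 y t * Dn 5 x t = 0"
    if t: "t \<in> I" for t
  proof -
    have "((\<lambda>s. Dn 2 x s * Dn 3 y s + Dn 1 x s * Dn 4 y s - Dn 2 y s * Dn 3 x s - Dn 1 y s * Dn 4 x s)
      has_real_derivative
      Dn 3 x t * Dn 3 y t + Dn 2 x t * Dn 4 y t + (Dn 2 x t * Dn 4 y t + Dn 1 x t * Dn 5 y t)
       - (Dn 3 y t * Dn 3 x t + Dn 2 y t * Dn 4 x t) - (Dn 2 y t * Dn 4 x t + Dn 1 y t * Dn 5 x t)) (at t)"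
      by (auto intro!: derivative_eq_intros dx[OF t, simplified] dy[OF t, simplified] simp: algebra_simps)
    from const_deriv_zero[OF I t R3 this] show ?thesis by (simp add: algebra_simps)
  qed
  define Q1 where "Q1 t = Dn 1 x t * Dn 2 v2 t + Dn 1 v1 t * Dn 2 y t - Dn 1 y t * Dn 2 v1 t - Dn 1 v2 t * Dn 2 x t" for t
  define Q2 where "Q2 t = Dn 1 v1 t * Dn 2 v2 t - Dn 1 v2 t * Dn 2 v1 t" for t
  define PE where "PE e t = Pl (Dn 1 x t) (Dn 1 y t) (Dn 2 x t) (Dn 2 y t) (Dn 1 v1 t) (Dn 1 v2 t) (Dn 2 v1 t) (Dn 2 v2 t) e" for e t
  have PEx: "PE e t = 1 + e * Q1 t + e^2 * Q2 t" if t: "t \<in> I" for e t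
  proof -
    have "PE e t = (Dn 1 x t * Dn 2 y t - Dn 1 y t * Dn 2 x t) + e * Q1 t + e^2 * Q2 t"
      by (simp add: PE_def Pl_def Q1_def Q2_def algebra_simps power2_eq_square)
    then show ?thesis using R1[OF t] by simp
  qed
  have "continuous_on {a..b} (\<lambda>t. \<bar>Q1 t\<bar> + \<bar>Q2 t\<bar>)"
    unfolding Q1_def Q2_def by (intro continuous_intros cx cy cv1 cv2)
  from compact_continuous_image[OF this compact_Icc]
  have "bounded ((\<lambda>t. \<bar>Q1 t\<bar> + \<bar>Q2 t\<bar>) ` {a..b})" by (rule compact_imp_bounded)
  then obtain B where B: "B > 0" "\<And>t. t \<in> {a..b} \<Longrightarrow> \<bar>Q1 t\<bar> + \<bar>Q2 t\<bar> \<le> B"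
    unfolding bounded_pos by auto
  define \<delta> where "\<delta> = min 1 (1/(4*B))"
  have dpos: "\<delta> > 0" using B by (simp add: \<delta>_def)
  define U where "U = ball (0::real) \<delta>"
  have U: "open U" "convex U" "0 \<in> U" using dpos by (auto simp: U_def)
  have posU: "PE e t > 0" if e: "e \<in> U" and t: "t \<in> I" for e t
  proof (cases "t \<in> {a<..<b}")
    case True
    have e1: "\<bar>e\<bar> \<le> 1" using e by (simp add: U_def \<delta>_def)
    have "\<bar>e\<bar> < 1/(4*B)" using e by (simp add: U_def \<delta>_def)
    then have "\<bar>e\<bar> * B < 1/(4*B) * B" using B(1) by (rule mult_strict_right_mono)
    then have e2: "\<bar>e\<bar> * B < 1/4" using B(1) by simp
    show ?thesis unfolding PEx[OF t] using small_bound[OF e1 B(2) e2] True by auto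
  next
    case False
    have z: "Dn 1 v1 t = 0" "Dn 2 v1 t = 0" "Dn 1 v2 t = 0" "Dn 2 v2 t = 0"
      using van[OF t False] by blast+
    have "Q1 t = 0" "Q2 t = 0" unfolding Q1_def Q2_def z by simp_all
    then show ?thesis unfolding PEx[OF t] by simp
  qed
  have fml: "ea_curv_gen (\<lambda>t. x t + e * v1 t) (\<lambda>t. y t + e * v2 t) t *
             ea_speed (\<lambda>t. x t + e * v1 t) (\<lambda>t. y t + e * v2 t) t =
     Gf (Dn 1 x t + e * Dn 1 v1 t) (Dn 1 y t + e * Dn 1 v2 t) (Dn 2 x t + e * Dn 2 v1 t) (Dn 2 y t + e * Dn 2 v2 t)
        (Dn 3 x t + e * Dn 3 v1 t) (Dn 3 y t + e * Dn 3 v2 t) (Dn 4 x t + e * Dn 4 v1 t) (Dn 4 y t + e * Dn 4 v2 t)"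
    if e: "e \<in> U" and t: "t \<in> I" for e t
  proof (rule curv_formula[OF I _ _ _ _ _ _ _ _ _ t])
    fix s assume s: "s \<in> I"
    show "((\<lambda>t. x t + e * v1 t) has_real_derivative Dn 1 x s + e * Dn 1 v1 s) (at s)"
      by (rule DERIV_add[OF dx(1)[OF s] DERIV_cmult[OF dv1(1)[OF s]]])
    show "((\<lambda>t. Dn 1 x t + e * Dn 1 v1 t) has_real_derivative Dn 2 x s + e * Dn 2 v1 s) (at s)"
      by (rule DERIV_add[OF dx(2)[OF s] DERIV_cmult[OF dv1(2)[OF s]]])
    show "((\<lambda>t. Dn 2 x t + e * Dn 2 v1 t) has_real_derivative Dn 3 x s + e * Dn 3 v1 s) (at s)"
      by (rule DERIV_add[OF dx(3)[OF s] DERIV_cmult[OF dv1(3)[OF s]]])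
    show "((\<lambda>t. Dn 3 x t + e * Dn 3 v1 t) has_real_derivative Dn 4 x s + e * Dn 4 v1 s) (at s)"
      by (rule DERIV_add[OF dx(4)[OF s] DERIV_cmult[OF dv1(4)[OF s]]])
    show "((\<lambda>t. y t + e * v2 t) has_real_derivative Dn 1 y s + e * Dn 1 v2 s) (at s)"
      by (rule DERIV_add[OF dy(1)[OF s] DERIV_cmult[OF dv2(1)[OF s]]])
    show "((\<lambda>t. Dn 1 y t + e * Dn 1 v2 t) has_real_derivative Dn 2 y s + e * Dn 2 v2 s) (at s)"
      by (rule DERIV_add[OF dy(2)[OF s] DERIV_cmult[OF dv2(2)[OF s]]])
    show "((\<lambda>t. Dn 2 y t + e * Dn 2 v2 t) has_real_derivative Dn 3 y s + e * Dn 3 v2 s) (at s)"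
      by (rule DERIV_add[OF dy(3)[OF s] DERIV_cmult[OF dv2(3)[OF s]]])
    show "((\<lambda>t. Dn 3 y t + e * Dn 3 v2 t) has_real_derivative Dn 4 y s + e * Dn 4 v2 s) (at s)"
      by (rule DERIV_add[OF dy(4)[OF s] DERIV_cmult[OF dv2(4)[OF s]]])
    show "(Dn 1 x s + e * Dn 1 v1 s) * (Dn 2 y s + e * Dn 2 v2 s) - (Dn 1 y s + e * Dn 1 v2 s) * (Dn 2 x s + e * Dn 2 v1 s) > 0"
      using posU[OF e s] by (simp add: PE_def Pl_def)
  qed
  define fE where "fE e t = Gf (Dn 1 x t + e * Dn 1 v1 t) (Dn 1 y t + e * Dn 1 v2 t) (Dn 2 x t + e * Dn 2 v1 t) (Dn 2 y t + e * Dn 2 v2 t)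
        (Dn 3 x t + e * Dn 3 v1 t) (Dn 3 y t + e * Dn 3 v2 t) (Dn 4 x t + e * Dn 4 v1 t) (Dn 4 y t + e * Dn 4 v2 t)" for e t
  define fD where "fD e t = GfL (Dn 1 x t) (Dn 1 y t) (Dn 2 x t) (Dn 2 y t) (Dn 3 x t) (Dn 3 y t) (Dn 4 x t) (Dn 4 y t)
     (Dn 1 v1 t) (Dn 1 v2 t) (Dn 2 v1 t) (Dn 2 v2 t) (Dn 3 v1 t) (Dn 3 v2 t) (Dn 4 v1 t) (Dn 4 v2 t) e" for e t
  have eqI: "integral {a..b} (fE e) = curv_variation x y v1 v2 a b e" if e: "e \<in> U" for e
    unfolding curv_variation_def total_curv_def
    by (rule integral_cong) (use fml[OF e] sub in \<open>auto simp: fE_def\<close>)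
  have cs: "continuous_on (U \<times> {a..b}) (\<lambda>z. Dn k f (snd z))" if "C_inf_on I f" for k f
    by (rule cont_snd[OF Cinf_cont_sub[OF that I sub]]) auto
  have cst: "continuous_on {a..b} (\<lambda>z. Dn k f z)" if "C_inf_on I f" for k f
    using Cinf_cont_sub[OF that I sub] by simp
  have L: "((\<lambda>e. integral (cbox a b) (fE e)) has_field_derivative integral (cbox a b) (fD 0)) (at 0 within U)"
  proof (rule leibniz_rule_field_derivative[OF _ _ _ U(3) U(2)])
    fix e t assume e: "e \<in> U" and t: "t \<in> cbox a b"
    then have tI: "t \<in> I" using sub by auto
    show "((\<lambda>e. fE e t) has_field_derivative fD e t) (at e within U)"
      unfolding fE_def fD_def
      by (rule has_field_derivative_at_within[OF Gf_line_deriv]) (use posU[OF e tI] in \<open>simp add: PE_def\<close>)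
  next
    fix e assume e: "e \<in> U"
    have "continuous_on {a..b} (fE e)"
      unfolding fE_def[abs_def] Gf_line
      by (intro cont_Gg cont_Pl continuous_on_add cst Cx Cy Cv1 Cv2 continuous_on_const)
         (use posU[OF e] sub in \<open>auto simp: PE_def\<close>)
    then show "fE e integrable_on cbox a b" by (simp add: integrable_continuous_interval)
  next
    show "continuous_on (U \<times> cbox a b) (\<lambda>(e, t). fD e t)"
      unfolding case_prod_unfold fD_def GfL_def cbox_interval
      by (intro cont_GgD cont_Pl continuous_on_add cs Cx Cy Cv1 Cv2 continuous_on_fst continuous_on_id)
         (use posU sub in \<open>auto simp: PE_def\<close>)
  qed
  then have L2: "((\<lambda>e. integral {a..b} (fE e)) has_field_derivative integral {a..b} (fD 0)) (at 0)"
    using at_within_open[OF U(3) U(1)] by simp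
  have D1: "(curv_variation x y v1 v2 a b has_real_derivative integral {a..b} (fD 0)) (at 0)"
    by (rule has_field_derivative_transform_within_open[OF L2 U(1) U(3)]) (use eqI in auto)
  have pt: "fD 0 t = 2/3 * (F0f x y v1 v2 t * (K2f x y v1 v2 t + Kf x y v1 v2 t ^ 2)) + PhiDf x y v1 v2 t"
    if t: "t \<in> I" for t
  proof -
    have "fD 0 t = 2/3 * F0f x y v1 v2 t * (K2f x y v1 v2 t + Kf x y v1 v2 t ^ 2) + PhiDf x y v1 v2 t"
      unfolding fD_def PhiDf_def F0f_def F1f_def F2f_def F3f_def F4f_def G0f_def G1f_def Kf_def K1f_def K2f_def
      by (rule master[OF R1[OF t] R2[OF t] R3[OF t] R4[OF t]])
    then show ?thesis by simp
  qed
  have za: "Dn 0 v1 a = 0" "Dn 1 v1 a = 0" "Dn 2 v1 a = 0" "Dn 3 v1 a = 0"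
           "Dn 0 v2 a = 0" "Dn 1 v2 a = 0" "Dn 2 v2 a = 0" "Dn 3 v2 a = 0"
  proof -
    have na: "a \<notin> {a<..<b}" by simp
    show "Dn 0 v1 a = 0" "Dn 1 v1 a = 0" "Dn 2 v1 a = 0" "Dn 3 v1 a = 0"
           "Dn 0 v2 a = 0" "Dn 1 v2 a = 0" "Dn 2 v2 a = 0" "Dn 3 v2 a = 0"
      using van(1)[OF aI na, of 0] van(1)[OF aI na, of 1] van(1)[OF aI na, of 2] van(1)[OF aI na, of 3] van(2)[OF aI na, of 0] van(2)[OF aI na, of 1] van(2)[OF aI na, of 2] van(2)[OF aI na, of 3] by simp_all
  qed
  have zb: "Dn 0 v1 b = 0" "Dn 1 v1 b = 0" "Dn 2 v1 b = 0" "Dn 3 v1 b = 0"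
           "Dn 0 v2 b = 0" "Dn 1 v2 b = 0" "Dn 2 v2 b = 0" "Dn 3 v2 b = 0"
  proof -
    have nb: "b \<notin> {a<..<b}" by simp
    show "Dn 0 v1 b = 0" "Dn 1 v1 b = 0" "Dn 2 v1 b = 0" "Dn 3 v1 b = 0"
           "Dn 0 v2 b = 0" "Dn 1 v2 b = 0" "Dn 2 v2 b = 0" "Dn 3 v2 b = 0"
      using van(1)[OF bI nb, of 0] van(1)[OF bI nb, of 1] van(1)[OF bI nb, of 2] van(1)[OF bI nb, of 3] van(2)[OF bI nb, of 0] van(2)[OF bI nb, of 1] van(2)[OF bI nb, of 2] van(2)[OF bI nb, of 3] by simp_all
  qed
  have Pa: "Phif x y v1 v2 a = 0"
    unfolding Phif_def F3f_def F1f_def F0f_def G0f_def using za by simp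
  have Pb: "Phif x y v1 v2 b = 0"
    unfolding Phif_def F3f_def F1f_def F0f_def G0f_def using zb by simp
  have FTC: "(PhiDf x y v1 v2 has_integral (Phif x y v1 v2 b - Phif x y v1 v2 a)) {a..b}"
  proof (rule fundamental_theorem_of_calculus)
    show "a \<le> b" using ab by simp
    fix t assume "t \<in> {a..b}"
    then have tI: "t \<in> I" using sub by auto
    show "(Phif x y v1 v2 has_vector_derivative PhiDf x y v1 v2 t) (at t within {a..b})"
      using Phi_deriv[OF I Cx Cy Cv1 Cv2 tI]
      by (simp add: has_real_derivative_iff_has_vector_derivative has_vector_derivative_at_within)
  qed
  define g where "g t = 2/3 * (F0f x y v1 v2 t * (K2f x y v1 v2 t + Kf x y v1 v2 t ^ 2))" for t
  have cv1': "continuous_on {a..b} v1" "continuous_on {a..b} v2"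
    using cst[OF Cv1, of 0] cst[OF Cv2, of 0] by simp_all
  have "continuous_on {a..b} g"
    unfolding g_def F0f_def K2f_def Kf_def
    by (intro continuous_intros cst Cx Cy Cv1 Cv2 cv1')
  then have gi: "(g has_integral integral {a..b} g) {a..b}"
    using integrable_continuous_interval by blast
  have "((\<lambda>t. g t + PhiDf x y v1 v2 t) has_integral (integral {a..b} g)) {a..b}"
    using has_integral_add[OF gi FTC] Pa Pb by simp
  then have "(fD 0 has_integral integral {a..b} g) {a..b}"
    by (rule has_integral_eq[rotated]) (use pt sub in \<open>auto simp: g_def\<close>)
  then have "integral {a..b} (fD 0) = integral {a..b} g" by (rule integral_unique)
  also have "\<dots> = 2/3 * integral {a..b} (\<lambda>t. F0f x y v1 v2 t * (K2f x y v1 v2 t + Kf x y v1 v2 t ^ 2))"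
    unfolding g_def by simp
  finally have "integral {a..b} (fD 0) = 2/3 * integral {a..b} (\<lambda>t. F0f x y v1 v2 t * (K2f x y v1 v2 t + Kf x y v1 v2 t ^ 2))" .
  with D1 show ?thesis by simp
qed

lemma integral_pos_cont:
  fixes f :: "real \<Rightarrow> real"
  assumes cont: "continuous_on {a..b} f" and nn: "\<And>t. t \<in> {a..b} \<Longrightarrow> f t \<ge> 0"
    and s: "a < s" "s < b" and fs: "f s > 0"
  shows "integral {a..b} f > 0"
proof -
  have sab: "s \<in> {a..b}" using s by auto
  obtain d where d: "d > 0" "\<And>x'. x' \<in> {a..b} \<Longrightarrow> dist x' s < d \<Longrightarrow> dist (f x') (f s) < f s / 2"
    using cont sab fs unfolding continuous_on_iff by (metis half_gt_zero)
  define \<eta> where "\<eta> = min (d/2) (min ((s-a)/2) ((b-s)/2))"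
  have e3: "\<eta> \<le> (s-a)/2" "\<eta> \<le> (b-s)/2" "\<eta> \<le> d/2" by (auto simp: \<eta>_def min_def)
  have "\<eta> > 0" using d s by (simp add: \<eta>_def)
  moreover have "2*\<eta> \<le> s - a" "2*\<eta> \<le> b - s" "2*\<eta> \<le> d" using e3 by simp_all
  ultimately have eta: "\<eta> > 0" "\<eta> < d" "a \<le> s - \<eta>" "s + \<eta> \<le> b" using d(1) by linarith+
  define c0 where "c0 = s - \<eta>"
  define d0 where "d0 = s + \<eta>"
  have ord: "a \<le> c0" "c0 \<le> d0" "d0 \<le> b" "c0 < d0" using eta by (auto simp: c0_def d0_def)
  have int: "f integrable_on {u..v}" if "a \<le> u" "v \<le> b" for u v
    by (rule integrable_continuous_interval) (rule continuous_on_subset[OF cont], use that in auto)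
  have low: "f t \<ge> f s / 2" if "t \<in> {c0..d0}" for t
  proof -
    have "t \<in> {a..b}" "dist t s < d" using that ord eta by (auto simp: c0_def d0_def dist_real_def)
    then have "dist (f t) (f s) < f s / 2" using d(2) by blast
    then have "\<bar>f t - f s\<bar> < f s / 2" by (simp add: dist_real_def)
    then show ?thesis by arith
  qed
  have "integral {c0..d0} (\<lambda>_. f s / 2) \<le> integral {c0..d0} f"
    by (rule integral_le) (use int ord low in auto)
  moreover have "integral {c0..d0} (\<lambda>_. f s / 2) = (d0 - c0) * (f s / 2)" using ord by simp
  moreover have "(d0 - c0) * (f s / 2) > 0" using ord fs by simp
  ultimately have mid: "integral {c0..d0} f > 0" by linarith
  have l: "integral {a..c0} f \<ge> 0" by (rule integral_nonneg) (use int ord nn in auto)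
  have r: "integral {d0..b} f \<ge> 0" by (rule integral_nonneg) (use int ord nn in auto)
  have "integral {c0..d0} f + integral {d0..b} f = integral {c0..b} f"
    by (rule Henstock_Kurzweil_Integration.integral_combine) (use ord int in auto)
  moreover have "integral {a..c0} f + integral {c0..b} f = integral {a..b} f"
    by (rule Henstock_Kurzweil_Integration.integral_combine) (use ord int in auto)
  ultimately show ?thesis using l r mid by linarith
qed

lemma bump_cont: "isCont (bump a b) t"
  using smooth_diff[OF smooth_bump] DERIV_isCont DERIV_deriv_iff_real_differentiable by blast

lemma test_var:
  fixes w :: "real \<Rightarrow> real"
  assumes I: "open I" and s0: "s0 \<in> I" and cw: "continuous_on I w" and ws: "w s0 > 0"
  shows "\<exists>a b. a < b \<and> a \<in> I \<and> b \<in> I \<and> {a..b} \<subseteq> I \<and> integral {a..b} (\<lambda>t. bump a b t * w t) > 0"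
proof -
  obtain d where d: "d > 0" "\<And>x'. x' \<in> I \<Longrightarrow> dist x' s0 < d \<Longrightarrow> dist (w x') (w s0) < w s0 / 2"
    using cw s0 ws unfolding continuous_on_iff by (metis half_gt_zero)
  obtain \<epsilon> where e: "\<epsilon> > 0" "ball s0 \<epsilon> \<subseteq> I" using I s0 open_contains_ball by blast
  define r where "r = min d \<epsilon> / 2"
  have r: "r > 0" "r < d" "r < \<epsilon>" using d e by (auto simp: r_def)
  define a where "a = s0 - r"
  define b where "b = s0 + r"
  have sub: "{a..b} \<subseteq> I"
  proof
    fix t assume "t \<in> {a..b}"
    then have "dist s0 t < \<epsilon>" using r by (auto simp: a_def b_def dist_real_def)
    then show "t \<in> I" using e by auto
  qed
  have wpos: "w t > 0" if "t \<in> {a..b}" for t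
  proof -
    have "t \<in> I" "dist t s0 < d" using that sub r by (auto simp: a_def b_def dist_real_def)
    then have "dist (w t) (w s0) < w s0 / 2" using d(2) by blast
    then have "\<bar>w t - w s0\<bar> < w s0 / 2" by (simp add: dist_real_def)
    then show ?thesis using ws by arith
  qed
  have ab: "a < b" "a \<in> I" "b \<in> I" using sub r by (auto simp: a_def b_def)
  have cont: "continuous_on {a..b} (\<lambda>t. bump a b t * w t)"
    by (intro continuous_intros continuous_on_subset[OF cw sub] continuous_at_imp_continuous_on)
       (auto intro: bump_cont)
  have "integral {a..b} (\<lambda>t. bump a b t * w t) > 0"
  proof (rule integral_pos_cont[OF cont])
    show "t \<in> {a..b} \<Longrightarrow> 0 \<le> bump a b t * w t" for t using wpos[of t] bump_nonneg[of a b t] by simp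
    show "a < s0" "s0 < b" using r by (auto simp: a_def b_def)
    show "0 < bump a b s0 * w s0" using bump_pos[of a s0 b] ws r by (simp add: a_def b_def)
  qed
  then show ?thesis using ab sub by blast
qed

lemma rels12:
  fixes x y :: "real \<Rightarrow> real"
  assumes I: "open I" and Cx: "C_inf_on I x" and Cy: "C_inf_on I y"
    and det1: "\<forall>s\<in>I. det2 (deriv x s) (deriv y s) ((deriv ^^ 2) x s) ((deriv ^^ 2) y s) = 1"
    and t: "t \<in> I"
  shows "Dn 1 x t * Dn 2 y t - Dn 1 y t * Dn 2 x t = 1" "Dn 1 x t * Dn 3 y t - Dn 1 y t * Dn 3 x t = 0"
proof -
  note dx = Cd[OF Cx I] and dy = Cd[OF Cy I]
  have R1: "Dn 1 x t * Dn 2 y t - Dn 1 y t * Dn 2 x t = 1" if "t \<in> I" for t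
    using det1 that by (simp add: det2_def)
  then show "Dn 1 x t * Dn 2 y t - Dn 1 y t * Dn 2 x t = 1" using t .
  have "((\<lambda>s. Dn 1 x s * Dn 2 y s - Dn 1 y s * Dn 2 x s) has_real_derivative
    Dn 2 x t * Dn 2 y t + Dn 1 x t * Dn 3 y t - (Dn 2 y t * Dn 2 x t + Dn 1 y t * Dn 3 x t)) (at t)"
    by (auto intro!: derivative_eq_intros dx[OF t, simplified] dy[OF t, simplified] simp: algebra_simps)
  from const_deriv_zero[OF I t R1 this]
  show "Dn 1 x t * Dn 3 y t - Dn 1 y t * Dn 3 x t = 0" by (simp add: algebra_simps)
qed

lemma x3rel:
  fixes x y :: "real \<Rightarrow> real"
  assumes "Dn 1 x t * Dn 2 y t - Dn 1 y t * Dn 2 x t = 1" "Dn 1 x t * Dn 3 y t - Dn 1 y t * Dn 3 x t = 0"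
  shows "Dn 3 x t = - Kf x y v1 v2 t * Dn 1 x t" "Dn 3 y t = - Kf x y v1 v2 t * Dn 1 y t"
proof -
  obtain x1 x2 x3 y1 y2 y3 where h: "x1 = Dn 1 x t" "x2 = Dn 2 x t" "x3 = Dn 3 x t"
    "y1 = Dn 1 y t" "y2 = Dn 2 y t" "y3 = Dn 3 y t" by blast
  have a: "x1*y2 - y1*x2 = 1" "x1*y3 - y1*x3 = 0" using assms unfolding h by auto
  have "x3 = - (x2*y3 - y2*x3) * x1" "y3 = - (x2*y3 - y2*x3) * y1" using a by algebra+
  then show "Dn 3 x t = - Kf x y v1 v2 t * Dn 1 x t" "Dn 3 y t = - Kf x y v1 v2 t * Dn 1 y t"
    unfolding h Kf_def by auto
qed

lemma kappa_eq:
  fixes x y :: "real \<Rightarrow> real"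
  assumes R: "Dn 1 x t * Dn 2 y t - Dn 1 y t * Dn 2 x t = 1" "Dn 1 x t * Dn 3 y t - Dn 1 y t * Dn 3 x t = 0"
  shows "ea_kappa x y t = Kf x y v1 v2 t"
  unfolding ea_kappa_def
proof (rule the_equality)
  show "(deriv ^^ 3) x t = - Kf x y v1 v2 t * deriv x t \<and> (deriv ^^ 3) y t = - Kf x y v1 v2 t * deriv y t"
    using x3rel[OF R, of v1 v2] by simp
next
  fix k assume k: "(deriv ^^ 3) x t = - k * deriv x t \<and> (deriv ^^ 3) y t = - k * deriv y t"
  obtain x1 x2 x3 y1 y2 y3 where h: "x1 = Dn 1 x t" "x2 = Dn 2 x t" "x3 = Dn 3 x t"
    "y1 = Dn 1 y t" "y2 = Dn 2 y t" "y3 = Dn 3 y t" by blast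
  have a: "x1*y2 - y1*x2 = 1" "x3 = -k*x1" "y3 = -k*y1" using R k unfolding h by auto
  have "k = x2*y3 - y2*x3" using a by algebra
  then show "k = Kf x y v1 v2 t" unfolding h Kf_def by simp
qed

theorem theorem3:
  fixes x y :: "real \<Rightarrow> real" and I :: "real set"
  assumes "open I" and "is_interval I" and "I \<noteq> {}"
    and "C_inf_on I x" and "C_inf_on I y"
    and "\<forall>s\<in>I. det2 (deriv x s) (deriv y s) ((deriv ^^ 2) x s) ((deriv ^^ 2) y s) = 1"
  shows "(area_constrained_critical I x y \<and> \<not> unconstrained_critical I x y) \<longleftrightarrow>
         (\<exists>o1 o2 c. c \<noteq> 0 \<and> (\<forall>s\<in>I. support_fn x y o1 o2 s = c * ea_kappa x y s))"
proof -
  note I = assms(1) and Iint = assms(2) and Ine = assms(3) and Cx = assms(4) and Cy = assms(5)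
    and det1 = assms(6)
  define z where "z = (\<lambda>_::real. 0::real)"
  have Cz: "C_inf_on I z" unfolding z_def using smooth_C_inf[OF smooth_const] .
  define \<kappa> where "\<kappa> t = Kf x y z z t" for t
  define \<kappa>1 where "\<kappa>1 t = K1f x y z z t" for t
  define \<kappa>2 where "\<kappa>2 t = K2f x y z z t" for t
  define E where "E t = \<kappa>2 t + \<kappa> t ^ 2" for t
  note R = rels12[OF I Cx Cy det1]
  note dx = Cd[OF Cx I] and dy = Cd[OF Cy I]
  have kap: "ea_kappa x y t = \<kappa> t" if "t \<in> I" for t
    unfolding \<kappa>_def using kappa_eq[OF R[OF that]] .
  have x3: "Dn 3 x t = - \<kappa> t * Dn 1 x t" "Dn 3 y t = - \<kappa> t * Dn 1 y t" if "t \<in> I" for t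
    unfolding \<kappa>_def using x3rel[OF R[OF that]] by auto
  have dk: "(\<kappa> has_real_derivative \<kappa>1 t) (at t)" "(\<kappa>1 has_real_derivative \<kappa>2 t) (at t)" if "t \<in> I" for t
    unfolding \<kappa>_def[abs_def] \<kappa>1_def[abs_def] \<kappa>2_def using F_derivs(6,7)[OF I Cx Cy Cz Cz that] by auto
  have ck: "continuous_on I \<kappa>" "continuous_on I \<kappa>2"
  proof -
    show "continuous_on I \<kappa>" using dk(1) DERIV_isCont continuous_at_imp_continuous_on by blast
    show "continuous_on I \<kappa>2" unfolding \<kappa>2_def[abs_def] K2f_def
      by (intro continuous_intros Cinf_cont[OF Cx I] Cinf_cont[OF Cy I])
  qed
  have cE: "continuous_on I E" unfolding E_def[abs_def] by (intro continuous_intros ck)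
  have var: "(curv_variation x y v1 v2 a b has_real_derivative
       2/3 * integral {a..b} (\<lambda>t. F0f x y v1 v2 t * E t)) (at 0)"
    if adm: "admissible_var I v1 v2 a b" for v1 v2 a b
  proof -
    have "(\<lambda>t. F0f x y v1 v2 t * (K2f x y v1 v2 t + Kf x y v1 v2 t ^ 2)) = (\<lambda>t. F0f x y v1 v2 t * E t)"
      by (simp add: E_def \<kappa>_def \<kappa>2_def Kf_def K2f_def)
    then show ?thesis using variation[OF I Iint Cx Cy det1 adm] by simp
  qed
  have area: "area_variation x y v1 v2 a b = - integral {a..b} (F0f x y v1 v2)" for v1 v2 a b
    unfolding area_variation_def det2_def F0f_def by simp
  have tadm: "admissible_var I (\<lambda>t. c1 * bump a b t) (\<lambda>t. c2 * bump a b t) a b"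
    if "a < b" "a \<in> I" "b \<in> I" for a b c1 c2
    unfolding admissible_var_def using that
    by (auto intro!: smooth_C_inf smooth_cmult smooth_bump simp: bump_zero)
  have tF0: "F0f x y (\<lambda>t. c1 * bump a b t) (\<lambda>t. c2 * bump a b t) t = bump a b t * (c2 * Dn 1 x t - c1 * Dn 1 y t)"
    for a b c1 c2 t by (simp add: F0f_def algebra_simps)
  have intF0: "continuous_on {a..b} (F0f x y v1 v2)" if "admissible_var I v1 v2 a b" for v1 v2 a b
  proof -
    have ab: "a \<in> I" "b \<in> I" "C_inf_on I v1" "C_inf_on I v2" using that unfolding admissible_var_def by auto
    have sub: "{a..b} \<subseteq> I" using mem_is_interval_1_I[OF Iint ab(1,2)] by auto
    have "continuous_on {a..b} v1" "continuous_on {a..b} v2"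
      using Cinf_cont_sub[OF ab(3) I sub, of 0] Cinf_cont_sub[OF ab(4) I sub, of 0] by simp_all
    then show ?thesis unfolding F0f_def[abs_def]
      by (intro continuous_intros Cinf_cont_sub[OF Cx I sub] Cinf_cont_sub[OF Cy I sub])
  qed
  have Esub: "integral {a..b} (\<lambda>t. F0f x y v1 v2 t * E t) = K * integral {a..b} (F0f x y v1 v2)"
    if "admissible_var I v1 v2 a b" "\<forall>t\<in>I. E t = K" for v1 v2 a b K
  proof -
    have ab: "a \<in> I" "b \<in> I" using that unfolding admissible_var_def by auto
    have sub: "{a..b} \<subseteq> I" using mem_is_interval_1_I[OF Iint ab(1,2)] by auto
    have "integral {a..b} (\<lambda>t. F0f x y v1 v2 t * E t) = integral {a..b} (\<lambda>t. K * F0f x y v1 v2 t)"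
      by (rule integral_cong) (use that sub in auto)
    then show ?thesis by simp
  qed
  show ?thesis
  proof
    assume L: "area_constrained_critical I x y \<and> \<not> unconstrained_critical I x y"
    from L obtain lam where lam: "\<And>v1 v2 a b. admissible_var I v1 v2 a b \<Longrightarrow>
        (curv_variation x y v1 v2 a b has_real_derivative lam * area_variation x y v1 v2 a b) (at 0)"
      unfolding area_constrained_critical_def by blast
    have NU: "\<not> unconstrained_critical I x y" using L by blast
    have EL: "2/3 * integral {a..b} (\<lambda>t. F0f x y v1 v2 t * E t) = lam * (- integral {a..b} (F0f x y v1 v2))"
      if adm: "admissible_var I v1 v2 a b" for v1 v2 a b
      using DERIV_unique[OF var[OF adm] lam[OF adm]] area by simp
    have Ec: "2/3 * E t + lam = 0" if t: "t \<in> I" for t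
    proof (rule ccontr)
      assume ne: "2/3 * E t + lam \<noteq> 0"
      define h where "h s = 2/3 * E s + lam" for s
      define \<sigma> where "\<sigma> = sgn (h t)"
      define w where "w s = \<sigma> * h s * (Dn 1 x s * Dn 2 y t - Dn 1 y s * Dn 2 x t)" for s
      have cw: "continuous_on I w" unfolding w_def[abs_def] h_def
        by (intro continuous_intros cE Cinf_cont[OF Cx I] Cinf_cont[OF Cy I])
      have "\<sigma> * h t > 0" using ne unfolding \<sigma>_def h_def
        by (cases "2/3 * E t + lam > 0") (auto simp: sgn_if)
      then have ws: "w t > 0" using R(1)[OF t] by (simp add: w_def)
      obtain a b where ab: "a < b" "a \<in> I" "b \<in> I" and sub: "{a..b} \<subseteq> I"
        and ip: "integral {a..b} (\<lambda>s. bump a b s * w s) > 0"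
        using test_var[OF I t cw ws] by blast
      define V1 where "V1 = (\<lambda>s. (\<sigma> * Dn 2 x t) * bump a b s)"
      define V2 where "V2 = (\<lambda>s. (\<sigma> * Dn 2 y t) * bump a b s)"
      have adm: "admissible_var I V1 V2 a b" unfolding V1_def V2_def by (rule tadm[OF ab])
      have Fh: "F0f x y V1 V2 s * h s = bump a b s * w s" for s
        unfolding V1_def V2_def by (subst tF0) (simp add: w_def algebra_simps)
      have cF: "continuous_on {a..b} (F0f x y V1 V2)" by (rule intF0[OF adm])
      have cE': "continuous_on {a..b} E" using continuous_on_subset[OF cE sub] .
      have i1: "(\<lambda>s. F0f x y V1 V2 s * E s) integrable_on {a..b}"
        by (rule integrable_continuous_interval) (intro continuous_intros cF cE')
      have i2: "F0f x y V1 V2 integrable_on {a..b}" by (rule integrable_continuous_interval[OF cF])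
      have "integral {a..b} (\<lambda>s. bump a b s * w s) = integral {a..b} (\<lambda>s. F0f x y V1 V2 s * h s)"
        using Fh by simp
      also have "\<dots> = integral {a..b} (\<lambda>s. 2/3 * (F0f x y V1 V2 s * E s) + lam * F0f x y V1 V2 s)"
        by (rule integral_cong) (simp add: h_def algebra_simps)
      also have "\<dots> = 2/3 * integral {a..b} (\<lambda>s. F0f x y V1 V2 s * E s) + lam * integral {a..b} (F0f x y V1 V2)"
      proof -
        have "integral {a..b} (\<lambda>s. 2/3 * (F0f x y V1 V2 s * E s) + lam * F0f x y V1 V2 s)
          = integral {a..b} (\<lambda>s. 2/3 * (F0f x y V1 V2 s * E s)) + integral {a..b} (\<lambda>s. lam * F0f x y V1 V2 s)"
          by (rule integral_add; rule integrable_on_mult_right; fact)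
        then show ?thesis by simp
      qed
      also have "\<dots> = 0" using EL[OF adm] by simp
      finally show False using ip by simp
    qed
    have lam0: "lam \<noteq> 0"
    proof
      assume l0: "lam = 0"
      have E0: "\<forall>t\<in>I. E t = 0" using Ec l0 by simp
      have "unconstrained_critical I x y" unfolding unconstrained_critical_def
      proof (intro allI impI)
        fix v1 v2 a b assume adm: "admissible_var I v1 v2 a b"
        show "(curv_variation x y v1 v2 a b has_real_derivative 0) (at 0)"
          using var[OF adm] unfolding Esub[OF adm E0] by simp
      qed
      then show False using NU by blast
    qed
    define K where "K = -3/2 * lam"
    define c where "c = 1 / K"
    have K0: "K \<noteq> 0" using lam0 by (simp add: K_def)
    have cK: "c * K = 1" using K0 by (simp add: c_def)
    have EK: "E t = K" if "t \<in> I" for t using Ec[OF that] by (simp add: K_def)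
    define O1 where "O1 s = x s - c * \<kappa>1 s * Dn 1 x s + c * \<kappa> s * Dn 2 x s" for s
    define O2 where "O2 s = y s - c * \<kappa>1 s * Dn 1 y s + c * \<kappa> s * Dn 2 y s" for s
    have dO: "(O1 has_real_derivative 0) (at t)" "(O2 has_real_derivative 0) (at t)" if t: "t \<in> I" for t
    proof -
      have e: "c * (\<kappa>2 t + \<kappa> t ^ 2) = 1" using EK[OF t] cK by (simp add: E_def)
      have "(O1 has_real_derivative Dn 1 x t - c * (\<kappa>2 t * Dn 1 x t + \<kappa>1 t * Dn 2 x t) + c * (\<kappa>1 t * Dn 2 x t + \<kappa> t * Dn 3 x t)) (at t)"
        unfolding O1_def[abs_def]
        by (auto intro!: derivative_eq_intros dx[OF t, simplified] dk[OF t] simp: algebra_simps)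
      moreover have "Dn 1 x t - c * (\<kappa>2 t * Dn 1 x t + \<kappa>1 t * Dn 2 x t) + c * (\<kappa>1 t * Dn 2 x t + \<kappa> t * Dn 3 x t)
          = Dn 1 x t * (1 - c * (\<kappa>2 t + \<kappa> t ^ 2))"
        unfolding x3[OF t] by (simp add: algebra_simps power2_eq_square)
      ultimately show "(O1 has_real_derivative 0) (at t)" using e by simp
      have "(O2 has_real_derivative Dn 1 y t - c * (\<kappa>2 t * Dn 1 y t + \<kappa>1 t * Dn 2 y t) + c * (\<kappa>1 t * Dn 2 y t + \<kappa> t * Dn 3 y t)) (at t)"
        unfolding O2_def[abs_def]
        by (auto intro!: derivative_eq_intros dy[OF t, simplified] dk[OF t] simp: algebra_simps)
      moreover have "Dn 1 y t - c * (\<kappa>2 t * Dn 1 y t + \<kappa>1 t * Dn 2 y t) + c * (\<kappa>1 t * Dn 2 y t + \<kappa> t * Dn 3 y t)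
          = Dn 1 y t * (1 - c * (\<kappa>2 t + \<kappa> t ^ 2))"
        unfolding x3[OF t] by (simp add: algebra_simps power2_eq_square)
      ultimately show "(O2 has_real_derivative 0) (at t)" using e by simp
    qed
    have cvx: "convex I" using is_interval_convex[OF Iint] .
    obtain o1 where o1: "\<forall>s\<in>I. O1 s = o1"
      using has_field_derivative_zero_constant[OF cvx, of O1] dO(1) has_field_derivative_at_within by blast
    obtain o2 where o2: "\<forall>s\<in>I. O2 s = o2"
      using has_field_derivative_zero_constant[OF cvx, of O2] dO(2) has_field_derivative_at_within by blast
    have "\<forall>s\<in>I. support_fn x y o1 o2 s = c * ea_kappa x y s"
    proof
      fix s assume s: "s \<in> I"
      have "support_fn x y o1 o2 s = (x s - O1 s) * Dn 1 y s - (y s - O2 s) * Dn 1 x s"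
        using o1 o2 s by (simp add: support_fn_def det2_def)
      also have "\<dots> = c * \<kappa> s * (Dn 1 x s * Dn 2 y s - Dn 1 y s * Dn 2 x s)"
        by (simp add: O1_def O2_def algebra_simps)
      also have "\<dots> = c * ea_kappa x y s" using R(1)[OF s] kap[OF s] by simp
      finally show "support_fn x y o1 o2 s = c * ea_kappa x y s" .
    qed
    moreover have "c \<noteq> 0" using K0 by (simp add: c_def)
    ultimately show "\<exists>o1 o2 c. c \<noteq> 0 \<and> (\<forall>s\<in>I. support_fn x y o1 o2 s = c * ea_kappa x y s)" by blast
  next
    assume "\<exists>o1 o2 c. c \<noteq> 0 \<and> (\<forall>s\<in>I. support_fn x y o1 o2 s = c * ea_kappa x y s)"
    then obtain o1 o2 c where c: "c \<noteq> 0" and sf: "\<forall>s\<in>I. support_fn x y o1 o2 s = c * ea_kappa x y s"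
      by blast
    define \<rho> where "\<rho> s = (x s - o1) * Dn 1 y s - (y s - o2) * Dn 1 x s" for s
    define \<rho>1 where "\<rho>1 s = (x s - o1) * Dn 2 y s - (y s - o2) * Dn 2 x s" for s
    have rho: "\<rho> s - c * \<kappa> s = 0" if "s \<in> I" for s
      using sf that kap[OF that] by (simp add: support_fn_def det2_def \<rho>_def)
    have rho1: "\<rho>1 t - c * \<kappa>1 t = 0" if t: "t \<in> I" for t
    proof -
      have "((\<lambda>s. \<rho> s - c * \<kappa> s) has_real_derivative
        (Dn 1 x t * Dn 1 y t + (x t - o1) * Dn 2 y t - (Dn 1 y t * Dn 1 x t + (y t - o2) * Dn 2 x t)) - c * \<kappa>1 t) (at t)"
        unfolding \<rho>_def[abs_def]
        by (auto intro!: derivative_eq_intros dx[OF t, simplified] dy[OF t, simplified] dk[OF t] simp: algebra_simps)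
      from const_deriv_zero[OF I t rho this] show ?thesis by (simp add: \<rho>1_def algebra_simps)
    qed
    have EE: "E t = 1/c" if t: "t \<in> I" for t
    proof -
      have "((\<lambda>s. \<rho>1 s - c * \<kappa>1 s) has_real_derivative
        (Dn 1 x t * Dn 2 y t + (x t - o1) * Dn 3 y t - (Dn 1 y t * Dn 2 x t + (y t - o2) * Dn 3 x t)) - c * \<kappa>2 t) (at t)"
        unfolding \<rho>1_def[abs_def]
        by (auto intro!: derivative_eq_intros dx[OF t, simplified] dy[OF t, simplified] dk[OF t] simp: algebra_simps)
      from const_deriv_zero[OF I t rho1 this]
      have "(Dn 1 x t * Dn 2 y t - Dn 1 y t * Dn 2 x t) + (x t - o1) * Dn 3 y t - (y t - o2) * Dn 3 x t - c * \<kappa>2 t = 0"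
        by (simp add: algebra_simps)
      then have "1 - \<kappa> t * \<rho> t - c * \<kappa>2 t = 0"
        unfolding R(1)[OF t] x3[OF t] \<rho>_def by (simp add: algebra_simps)
      then have "1 - \<kappa> t * (c * \<kappa> t) - c * \<kappa>2 t = 0" using rho[OF t] by simp
      then show ?thesis using c by (simp add: E_def field_simps power2_eq_square)
    qed
    have EEall: "\<forall>t\<in>I. E t = 1/c" using EE by blast
    show "area_constrained_critical I x y \<and> \<not> unconstrained_critical I x y"
    proof
      show "area_constrained_critical I x y"
        unfolding area_constrained_critical_def
      proof (intro exI allI impI)
        fix v1 v2 a b assume adm: "admissible_var I v1 v2 a b"
        have "2/3 * integral {a..b} (\<lambda>t. F0f x y v1 v2 t * E t) = - 2 / (3 * c) * area_variation x y v1 v2 a b"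
          unfolding Esub[OF adm EEall] area by simp
        then show "(curv_variation x y v1 v2 a b has_real_derivative - 2 / (3 * c) * area_variation x y v1 v2 a b) (at 0)"
          using var[OF adm] by (simp add: mult.commute)
      qed
    next
      show "\<not> unconstrained_critical I x y"
      proof
        assume U: "unconstrained_critical I x y"
        obtain s0 where s0: "s0 \<in> I" using Ine by blast
        define w where "w t = Dn 1 x t * Dn 2 y s0 - Dn 1 y t * Dn 2 x s0" for t
        have cw: "continuous_on I w" unfolding w_def[abs_def]
          by (intro continuous_intros Cinf_cont[OF Cx I] Cinf_cont[OF Cy I])
        have ws: "w s0 > 0" using R(1)[OF s0] by (simp add: w_def)
        obtain a b where ab: "a < b" "a \<in> I" "b \<in> I" "{a..b} \<subseteq> I"
          and ip: "integral {a..b} (\<lambda>t. bump a b t * w t) > 0"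
          using test_var[OF I s0 cw ws] by blast
        note adm = tadm[OF ab(1-3), of "Dn 2 x s0" "Dn 2 y s0"]
        have F0w: "F0f x y (\<lambda>t. Dn 2 x s0 * bump a b t) (\<lambda>t. Dn 2 y s0 * bump a b t) = (\<lambda>t. bump a b t * w t)"
          by (rule ext, subst tF0) (simp add: w_def algebra_simps)
        have d0: "(curv_variation x y (\<lambda>t. Dn 2 x s0 * bump a b t) (\<lambda>t. Dn 2 y s0 * bump a b t) a b
            has_real_derivative 0) (at 0)"
          using U adm unfolding unconstrained_critical_def by blast
        have "2/3 * integral {a..b} (\<lambda>t. F0f x y (\<lambda>t. Dn 2 x s0 * bump a b t) (\<lambda>t. Dn 2 y s0 * bump a b t) t * E t) = 0"
          using DERIV_unique[OF var[OF adm] d0] .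
        then have "2/3 * (1/c * integral {a..b} (F0f x y (\<lambda>t. Dn 2 x s0 * bump a b t) (\<lambda>t. Dn 2 y s0 * bump a b t))) = 0"
          using Esub[OF adm EEall] by simp
        then have "2/3 * (1/c * integral {a..b} (\<lambda>t. bump a b t * w t)) = 0"
          unfolding F0w .
        then show False using ip c by simp
      qed
    qed
  qed
qed

end
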